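(* Let $\mathcal H_X,\mathcal H_Y$ be finite-dimensional Hilbert spaces with $\dim\mathcal H_X\ge2$, let $\rho$ be a state on $\mathcal H_X\otimes\mathcal H_Y$, and let $\ket{\alpha_0},\ket{\alpha_1}\in\mathcal H_X$ be orthonormal. Define the operators on $\mathcal H_Y$ $$A=\bra{\alpha_0}\rho\ket{\alpha_0},\qquad B=\bra{\alpha_0}\rho\ket{\alpha_1},\qquad D=\bra{\alpha_1}\rho\ket{\alpha_1}$$ (partial matrix elements on the $X$ factor). Assume that $A\neq0$, $\operatorname{Ker}A\neq\{0\}$, and $P_{\operatorname{supp}A}\,B\,P_{\operatorname{Ker}A}\neq0$, where $P_{\operatorname{supp}A}$ and $P_{\operatorname{Ker}A}$ are the orthogonal projectors onto the support (range) and the kernel of $A$. Then $\rho$ is NPT across the cut $X|Y$ (its partial transpose with respect to $Y$ is not positive semidefinite), and the projective assemblage generated by projective measurements on $X$ admits no local hidden state model; hence $\rho$ is projectively steerable from $X$ to $Y$.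
   Context: For a bipartite state $\rho$ on $\mathcal H_X\otimes\mathcal H_Y$, the projective assemblage from $X$ to $Y$ consists of the unnormalized conditional states $\sigma_{a|M}=\operatorname{tr}_X[(\Pi_a\otimes I_Y)\rho]$ for all projective measurements $M=\{\Pi_a\}$ on $\mathcal H_X$. It admits a local hidden state (LHS) model if there exist a probability space $(\Lambda,\mu)$, density matrices $\tau_\lambda$ on $\mathcal H_Y$ (measurable in $\lambda$) and response functions $p(a|M,\lambda)\ge0$ with $\sum_a p(a|M,\lambda)=1$ such that $\sigma_{a|M}=\int_\Lambda p(a|M,\lambda)\tau_\lambda\,d\mu(\lambda)$ for all $M$ and $a$. The state is projectively steerable from $X$ to $Y$ if no such model exists. NPT means the partial transpose (with respect to any fixed basis of $\mathcal H_Y$) is not positive semidefinite. *)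

theory Defs
  imports "HOL-Probability.Probability"
begin

text \<open>Finite-dimensional Hilbert spaces are modelled as complex functions on a finite
  index type (standard inner product); operators are matrices indexed by that type.
  The bipartite space H_X (x) H_Y is indexed by the product type.\<close>

type_synonym 'a cmat = "'a \<Rightarrow> 'a \<Rightarrow> complex"

definition cinner :: "('a::finite \<Rightarrow> complex) \<Rightarrow> ('a \<Rightarrow> complex) \<Rightarrow> complex" where
  "cinner u v = (\<Sum>i\<in>UNIV. cnj (u i) * v i)"

definition mat_vec :: "'a::finite cmat \<Rightarrow> ('a \<Rightarrow> complex) \<Rightarrow> ('a \<Rightarrow> complex)" where
  "mat_vec M v = (\<lambda>i. \<Sum>j\<in>UNIV. M i j * v j)"

definition mat_mult :: "'a::finite cmat \<Rightarrow> 'a cmat \<Rightarrow> 'a cmat" where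
  "mat_mult M N = (\<lambda>i k. \<Sum>j\<in>UNIV. M i j * N j k)"

definition adjoint :: "'a cmat \<Rightarrow> 'a cmat" where
  "adjoint M = (\<lambda>i j. cnj (M j i))"

definition id_mat :: "'a cmat" where
  "id_mat = (\<lambda>i j. if i = j then 1 else 0)"

definition zero_mat :: "'a cmat" where
  "zero_mat = (\<lambda>i j. 0)"

definition mat_trace :: "'a::finite cmat \<Rightarrow> complex" where
  "mat_trace M = (\<Sum>i\<in>UNIV. M i i)"

definition psd :: "'a::finite cmat \<Rightarrow> bool" where
  "psd M \<longleftrightarrow> (\<forall>v. cinner v (mat_vec M v) \<in> \<real> \<and> Re (cinner v (mat_vec M v)) \<ge> 0)"

definition density_matrix :: "'a::finite cmat \<Rightarrow> bool" where
  "density_matrix M \<longleftrightarrow> psd M \<and> mat_trace M = 1"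

definition mat_kernel :: "'a::finite cmat \<Rightarrow> ('a \<Rightarrow> complex) set" where
  "mat_kernel A = {v. mat_vec A v = (\<lambda>_. 0)}"

definition mat_range :: "'a::finite cmat \<Rightarrow> ('a \<Rightarrow> complex) set" where
  "mat_range A = range (mat_vec A)"

definition is_orth_projector :: "'a::finite cmat \<Rightarrow> ('a \<Rightarrow> complex) set \<Rightarrow> bool" where
  "is_orth_projector P S \<longleftrightarrow> adjoint P = P \<and> mat_mult P P = P \<and> range (mat_vec P) = S"

definition orth_proj :: "('a::finite \<Rightarrow> complex) set \<Rightarrow> 'a cmat" where
  "orth_proj S = (THE P. is_orth_projector P S)"

text \<open>Partial matrix element on the X factor: <u| rho |w>, an operator on H_Y.\<close>
definition partial_elem ::
  "('x::finite \<times> 'y::finite) cmat \<Rightarrow> ('x \<Rightarrow> complex) \<Rightarrow> ('x \<Rightarrow> complex) \<Rightarrow> 'y cmat" where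
  "partial_elem \<rho> u w = (\<lambda>y y'. \<Sum>x\<in>UNIV. \<Sum>x'\<in>UNIV. cnj (u x) * \<rho> (x, y) (x', y') * w x')"

definition partial_transpose_Y :: "('x \<times> 'y) cmat \<Rightarrow> ('x \<times> 'y) cmat" where
  "partial_transpose_Y \<rho> = (\<lambda>(x, y) (x', y'). \<rho> (x, y') (x', y))"

definition NPT :: "('x::finite \<times> 'y::finite) cmat \<Rightarrow> bool" where
  "NPT \<rho> \<longleftrightarrow> \<not> psd (partial_transpose_Y \<rho>)"

text \<open>A projective measurement on H_X: a list of orthogonal projectors (outcome a is the
  index a < length M) summing to the identity.\<close>
definition proj_meas :: "'x::finite cmat list \<Rightarrow> bool" where
  "proj_meas M \<longleftrightarrow>
     (\<forall>a<length M. adjoint (M ! a) = M ! a \<and> mat_mult (M ! a) (M ! a) = M ! a) \<and>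
     (\<lambda>i j. \<Sum>a<length M. (M ! a) i j) = id_mat"

text \<open>sigma_{a|M} = tr_X[(Pi_a (x) I_Y) rho].\<close>
definition assemblage :: "('x::finite \<times> 'y::finite) cmat \<Rightarrow> 'x cmat \<Rightarrow> 'y cmat" where
  "assemblage \<rho> P = (\<lambda>y y'. \<Sum>x\<in>UNIV. \<Sum>x''\<in>UNIV. P x x'' * \<rho> (x'', y) (x, y'))"

definition LHS_model ::
  "'l measure \<Rightarrow> ('l \<Rightarrow> 'y cmat) \<Rightarrow> ('x cmat list \<Rightarrow> nat \<Rightarrow> 'l \<Rightarrow> real)
     \<Rightarrow> ('x::finite \<times> 'y::finite) cmat \<Rightarrow> bool" where
  "LHS_model \<mu> \<tau> p \<rho> \<longleftrightarrow>
     prob_space \<mu> \<and>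
     (\<forall>l\<in>space \<mu>. density_matrix (\<tau> l)) \<and>
     (\<forall>y y'. (\<lambda>l. \<tau> l y y') \<in> borel_measurable \<mu>) \<and>
     (\<forall>M. proj_meas M \<longrightarrow>
        (\<forall>a<length M. p M a \<in> borel_measurable \<mu>) \<and>
        (\<forall>a<length M. \<forall>l\<in>space \<mu>. p M a l \<ge> 0) \<and>
        (\<forall>l\<in>space \<mu>. (\<Sum>a<length M. p M a l) = 1) \<and>
        (\<forall>a<length M. assemblage \<rho> (M ! a) =
            (\<lambda>y y'. LINT l|\<mu>. complex_of_real (p M a l) * \<tau> l y y')))"

end

theory Submission
  imports Defs
begin

definition tensor :: "('x \<Rightarrow> complex) \<Rightarrow> ('y \<Rightarrow> complex) \<Rightarrow> ('x \<times> 'y \<Rightarrow> complex)" where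
  "tensor u v = (\<lambda>(x,y). u x * v y)"

lemma cinner_add_right: "cinner u (\<lambda>i. v i + w i) = cinner u v + cinner u w"
  by (simp add: cinner_def distrib_left sum.distrib)
lemma cinner_add_left: "cinner (\<lambda>i. v i + w i) u = cinner v u + cinner w u"
  by (simp add: cinner_def distrib_right sum.distrib)
lemma cinner_scale_right: "cinner u (\<lambda>i. c * v i) = c * cinner u v"
  by (simp add: cinner_def sum_distrib_left algebra_simps)
lemma cinner_scale_left: "cinner (\<lambda>i. c * v i) u = cnj c * cinner v u"
  by (simp add: cinner_def sum_distrib_left algebra_simps)
lemma cinner_zero_right[simp]: "cinner u (\<lambda>i. 0) = 0"
  by (simp add: cinner_def)
lemma cinner_zero_left[simp]: "cinner (\<lambda>i. 0) u = 0"
  by (simp add: cinner_def)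
lemma cinner_sym: "cinner u v = cnj (cinner v u)"
  by (simp add: cinner_def mult.commute)
lemma cinner_self: "cinner u u = of_real (\<Sum>i\<in>UNIV. (cmod (u i))\<^sup>2)"
  unfolding cinner_def of_real_sum
  by (intro sum.cong refl) (metis complex_norm_square mult.commute)
lemma cinner_self_eq0: "cinner u u = 0 \<longleftrightarrow> u = (\<lambda>_. 0)"
proof -
  have "cinner u u = 0 \<longleftrightarrow> (\<Sum>i\<in>UNIV. (cmod (u i))\<^sup>2) = 0"
    unfolding cinner_self of_real_eq_0_iff by simp
  also have "\<dots> \<longleftrightarrow> (\<forall>i. u i = 0)"
    by (subst sum_nonneg_eq_0_iff) auto
  finally show ?thesis by auto
qed

lemma mat_vec_add: "mat_vec M (\<lambda>i. v i + w i) = (\<lambda>i. mat_vec M v i + mat_vec M w i)"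
  by (simp add: mat_vec_def distrib_left sum.distrib)
lemma mat_vec_scale: "mat_vec M (\<lambda>i. c * v i) = (\<lambda>i. c * mat_vec M v i)"
  by (simp add: mat_vec_def sum_distrib_left algebra_simps)
lemma mat_vec_zero[simp]: "mat_vec M (\<lambda>i. 0) = (\<lambda>i. 0)"
  by (simp add: mat_vec_def)

lemma psd_herm:
  assumes "psd M"
  shows "cinner v (mat_vec M w) = cnj (cinner w (mat_vec M v))"
proof -
  define S where "S = (\<lambda>a b. cinner a (mat_vec M b))"
  have r: "S a a \<in> \<real>" for a using assms unfolding psd_def S_def by auto
  have e1: "S (\<lambda>i. v i + w i) (\<lambda>i. v i + w i) = S v v + S v w + S w v + S w w"
    unfolding S_def by (simp add: mat_vec_add cinner_add_left cinner_add_right)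
  have e2: "S (\<lambda>i. v i + \<i> * w i) (\<lambda>i. v i + \<i> * w i) = S v v + \<i> * S v w - \<i> * S w v + S w w"
    unfolding S_def by (simp add: mat_vec_add cinner_add_left cinner_add_right mat_vec_scale cinner_scale_left cinner_scale_right)
  have a: "Im (S v w + S w v) = 0"
    using r[of "\<lambda>i. v i + w i"] r[of v] r[of w] unfolding e1 by (auto simp: complex_is_Real_iff)
  have b: "Re (S v w - S w v) = 0"
    using r[of "\<lambda>i. v i + \<i> * w i"] r[of v] r[of w] unfolding e2 by (auto simp: complex_is_Real_iff)
  have "S v w = cnj (S w v)" using a b by (simp add: complex_eq_iff)
  then show ?thesis by (simp add: S_def)
qed

lemma psd_Re_nonneg: "psd M \<Longrightarrow> Re (cinner v (mat_vec M v)) \<ge> 0"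
  unfolding psd_def by auto
lemma psd_real: "psd M \<Longrightarrow> of_real (Re (cinner v (mat_vec M v))) = cinner v (mat_vec M v)"
  unfolding psd_def using of_real_Re by blast

lemma psd_cs:
  assumes "psd M" and eta: "\<eta> > 0"
  shows "cmod (cinner w (mat_vec M v)) \<le>
           (\<eta> * Re (cinner w (mat_vec M w)) + Re (cinner v (mat_vec M v)) / \<eta>) / 2"
proof (cases "cinner w (mat_vec M v) = 0")
  case True
  have "0 \<le> Re (cinner w (mat_vec M w))" "0 \<le> Re (cinner v (mat_vec M v))"
    by (rule psd_Re_nonneg[OF assms(1)])+
  then have "0 \<le> \<eta> * Re (cinner w (mat_vec M w)) + Re (cinner v (mat_vec M v)) / \<eta>"
    using eta by (intro add_nonneg_nonneg mult_nonneg_nonneg divide_nonneg_nonneg) auto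
  then show ?thesis using True by simp
next
  case False
  define g where "g = cinner w (mat_vec M v)"
  define a where "a = - of_real \<eta> * g / of_real (cmod g)"
  have gn: "cmod g > 0" using False g_def by simp
  have h1: "cinner v (mat_vec M w) = cnj g" unfolding g_def by (rule psd_herm[OF assms(1)])
  have Q: "cinner (\<lambda>i. a * w i + v i) (mat_vec M (\<lambda>i. a * w i + v i))
        = cnj a * a * cinner w (mat_vec M w) + cnj a * g + a * cnj g + cinner v (mat_vec M v)"
    by (simp add: mat_vec_add mat_vec_scale cinner_add_left cinner_add_right cinner_scale_left
        cinner_scale_right g_def h1 algebra_simps)
  have gg: "cnj g * g = of_real ((cmod g)^2)" "g * cnj g = of_real ((cmod g)^2)"
    by (metis complex_norm_square mult.commute)+
  have gnz: "(of_real (cmod g) :: complex) \<noteq> 0" using gn by simp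
  have c1: "cnj a * a = of_real (\<eta>^2)"
  proof -
    have "cnj a * a = of_real \<eta> * of_real \<eta> * (cnj g * g) / (of_real (cmod g) * of_real (cmod g))"
      by (simp add: a_def)
    also have "\<dots> = of_real (\<eta>^2)" unfolding gg using gnz
      by (simp add: power2_eq_square)
    finally show ?thesis .
  qed
  have c2: "cnj a * g = - of_real (\<eta> * cmod g)"
  proof -
    have "cnj a * g = - of_real \<eta> * (cnj g * g) / of_real (cmod g)"
      by (simp add: a_def)
    also have "\<dots> = - of_real (\<eta> * cmod g)" unfolding gg using gnz
      by (simp add: power2_eq_square)
    finally show ?thesis .
  qed
  have c3: "a * cnj g = - of_real (\<eta> * cmod g)"
  proof -
    have "a * cnj g = - of_real \<eta> * (g * cnj g) / of_real (cmod g)"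
      by (simp add: a_def)
    also have "\<dots> = - of_real (\<eta> * cmod g)" unfolding gg using gnz
      by (simp add: power2_eq_square)
    finally show ?thesis .
  qed
  have "0 \<le> Re (cinner (\<lambda>i. a * w i + v i) (mat_vec M (\<lambda>i. a * w i + v i)))"
    by (rule psd_Re_nonneg[OF assms(1)])
  also have "\<dots> = \<eta>^2 * Re (cinner w (mat_vec M w)) - 2 * \<eta> * cmod g + Re (cinner v (mat_vec M v))"
    unfolding Q c1 c2 c3 by simp
  finally have "2 * \<eta> * cmod g \<le> \<eta>^2 * Re (cinner w (mat_vec M w)) + Re (cinner v (mat_vec M v))"
    by simp
  then show ?thesis using eta unfolding g_def[symmetric]
    by (simp add: field_simps power2_eq_square)
qed


definition evec :: "'a \<Rightarrow> 'a \<Rightarrow> complex" where "evec k = (\<lambda>j. if j = k then 1 else 0)"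

lemma mat_vec_evec: "mat_vec M (evec k) i = M i k"
  by (simp add: mat_vec_def evec_def if_distrib cong: if_cong)

lemma mat_eqI: "(\<And>x. mat_vec M x = mat_vec N x) \<Longrightarrow> M = N"
proof -
  assume h: "\<And>x. mat_vec M x = mat_vec N x"
  show "M = N"
  proof (intro ext)
    fix i k show "M i k = N i k" using h[of "evec k"] mat_vec_evec[of M k i] mat_vec_evec[of N k i] by simp
  qed
qed

lemma mat_vec_mult: "mat_vec (mat_mult M N) x = mat_vec M (mat_vec N x)"
  unfolding mat_vec_def mat_mult_def
  by (auto simp: sum_distrib_left sum_distrib_right mult.assoc intro!: ext sum.swap)

lemma mat_mult_assoc: "mat_mult (mat_mult A B) C = mat_mult A (mat_mult B C)"
  by (rule mat_eqI) (simp add: mat_vec_mult)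

lemma adjoint_mult: "adjoint (mat_mult M N) = mat_mult (adjoint N) (adjoint M)"
  unfolding adjoint_def mat_mult_def by (auto intro!: ext sum.cong simp: mult.commute)

lemma mat_mult_zero_right: "mat_mult M zero_mat = zero_mat"
  by (simp add: mat_mult_def zero_mat_def)

lemma proj_fix: "mat_mult P P = P \<Longrightarrow> x \<in> range (mat_vec P) \<Longrightarrow> mat_vec P x = x"
  by (metis imageE mat_vec_mult)

lemma orth_proj_unique:
  assumes "is_orth_projector P S" "is_orth_projector Q S" shows "P = Q"
proof -
  have PQ: "mat_mult P Q = Q"
    using assms unfolding is_orth_projector_def
    by (intro mat_eqI) (auto simp: mat_vec_mult intro!: proj_fix)
  have QP: "mat_mult Q P = P"
    using assms unfolding is_orth_projector_def
    by (intro mat_eqI) (auto simp: mat_vec_mult intro!: proj_fix)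
  have "P = adjoint P" using assms unfolding is_orth_projector_def by simp
  also have "\<dots> = adjoint (mat_mult Q P)" using QP by simp
  also have "\<dots> = mat_mult (adjoint P) (adjoint Q)" by (rule adjoint_mult)
  also have "\<dots> = mat_mult P Q" using assms unfolding is_orth_projector_def by simp
  finally show ?thesis using PQ by simp
qed

lemma proj_diag:
  assumes "adjoint P = P" "mat_mult P P = P"
  shows "P i i = of_real (Re (P i i)) \<and> Re (P i i) \<le> 1"
proof -
  have Pc: "cnj (P a b) = P b a" for a b
    using fun_cong[OF fun_cong[OF assms(1)], of b a] by (simp add: adjoint_def)
  have "P i i = mat_mult P P i i" using assms(2) by simp
  also have "\<dots> = (\<Sum>j\<in>UNIV. P i j * P j i)" by (simp add: mat_mult_def)
  also have "\<dots> = (\<Sum>j\<in>UNIV. cnj (P j i) * P j i)"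
    by (simp add: Pc)
  also have "\<dots> = of_real (\<Sum>j\<in>UNIV. (cmod (P j i))\<^sup>2)"
    unfolding of_real_sum by (intro sum.cong refl) (metis complex_norm_square mult.commute)
  finally have e: "P i i = of_real (\<Sum>j\<in>UNIV. (cmod (P j i))\<^sup>2)" .
  define r where "r = (\<Sum>j\<in>UNIV. (cmod (P j i))\<^sup>2)"
  have sq: "(cmod (P i i))\<^sup>2 \<le> r" unfolding r_def
    by (rule member_le_sum) auto
  have e': "P i i = of_real r" using e unfolding r_def .
  moreover have "cmod (P i i) = \<bar>r\<bar>" unfolding e' by (rule norm_of_real)
  moreover have "r \<ge> 0" unfolding r_def by (simp add: sum_nonneg)
  ultimately have rr: "r * r \<le> r" using sq by (simp add: power2_eq_square)
  have "r \<le> 1"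
  proof (rule ccontr)
    assume "\<not> r \<le> 1"
    then have "r * 1 < r * r" by (intro mult_strict_left_mono) auto
    then show False using rr by simp
  qed
  then show ?thesis using e' by simp
qed

lemma proj_trace_le:
  fixes P :: "'a::finite cmat"
  assumes "adjoint P = P" "mat_mult P P = P"
  shows "Re (mat_trace P) \<le> real CARD('a::finite)"
proof -
  have "Re (mat_trace P) = (\<Sum>i\<in>(UNIV::'a set). Re (P i i))"
    unfolding mat_trace_def by simp
  also have "\<dots> \<le> (\<Sum>i\<in>(UNIV::'a set). 1)"
    using proj_diag[OF assms] by (intro sum_mono) auto
  finally show ?thesis by simp
qed

definition subsp :: "('a \<Rightarrow> complex) set \<Rightarrow> bool" where
  "subsp S \<longleftrightarrow> (\<lambda>_. 0) \<in> S \<and> (\<forall>x\<in>S. \<forall>y\<in>S. (\<lambda>i. x i + y i) \<in> S) \<and> (\<forall>c. \<forall>x\<in>S. (\<lambda>i. c * x i) \<in> S)"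

lemma subsp_add: "subsp S \<Longrightarrow> x \<in> S \<Longrightarrow> y \<in> S \<Longrightarrow> (\<lambda>i. x i + y i) \<in> S"
  unfolding subsp_def by blast
lemma subsp_scale: "subsp S \<Longrightarrow> x \<in> S \<Longrightarrow> (\<lambda>i. c * x i) \<in> S"
  unfolding subsp_def by blast

lemma ring4: "((a::complex) + b*c) * (d + f*g) = a*d + b*(c*d) + (a*f)*g + b*(c*f)*g"
  by (simp add: algebra_simps)

lemma proj_step:
  fixes P :: "'a::finite cmat"
  assumes S: "subsp S" and P: "adjoint P = P" "mat_mult P P = P" "range (mat_vec P) \<subseteq> S"
    and x: "x \<in> S" "x \<notin> range (mat_vec P)"
  shows "\<exists>P'. adjoint P' = P' \<and> mat_mult P' P' = P' \<and> range (mat_vec P') \<subseteq> S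
              \<and> Re (mat_trace P') = Re (mat_trace P) + 1"
proof -
  define u where "u = (\<lambda>i. x i + (-1) * mat_vec P x i)"
  have m: "mat_vec P x \<in> S" using P(3) by auto
  have m2: "(\<lambda>i. (-1) * mat_vec P x i) \<in> S" by (rule subsp_scale[OF S m])
  have uS: "u \<in> S" unfolding u_def by (rule subsp_add[OF S x(1) m2])
  have un: "u \<noteq> (\<lambda>_. 0)"
  proof
    assume "u = (\<lambda>_. 0)"
    then have "x = mat_vec P x" unfolding u_def by (auto simp: fun_eq_iff)
    then show False using x(2) by (metis rangeI)
  qed
  have PPx: "mat_vec P (mat_vec P x) = mat_vec P x" using P(2) by (metis mat_vec_mult)
  have "mat_vec P u = (\<lambda>i. mat_vec P x i + (-1) * mat_vec P (mat_vec P x) i)"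
    unfolding u_def by (simp only: mat_vec_add mat_vec_scale)
  then have Pu: "mat_vec P u = (\<lambda>_. 0)" unfolding PPx by simp
  define n where "n = sqrt (\<Sum>i\<in>UNIV. (cmod (u i))\<^sup>2)"
  have s0: "0 \<le> (\<Sum>i\<in>UNIV. (cmod (u i))\<^sup>2)" by (rule sum_nonneg) simp
  have uu: "cinner u u = of_real (n^2)" unfolding n_def cinner_self
    using s0 by simp
  have npos: "n > 0"
  proof -
    have "cinner u u \<noteq> 0" using un cinner_self_eq0 by blast
    then have "n \<noteq> 0" using uu by auto
    moreover have "n \<ge> 0" unfolding n_def using s0 by simp
    ultimately show ?thesis by simp
  qed
  define e where "e = (\<lambda>i. of_real (1/n) * u i)"
  have "cinner e e = cnj (of_real (1/n)) * (of_real (1/n) * of_real (n^2))"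
    unfolding e_def cinner_scale_left cinner_scale_right uu by (rule refl)
  also have "\<dots> = of_real ((1/n) * ((1/n) * n^2))" by simp
  also have "(1/n) * ((1/n) * n^2) = 1" using npos by (simp add: power2_eq_square)
  finally have ee: "cinner e e = 1" by simp
  have eS: "e \<in> S" unfolding e_def by (rule subsp_scale[OF S uS])
  have Pc: "cnj (P a b) = P b a" for a b
    using fun_cong[OF fun_cong[OF P(1)], of b a] by (simp add: adjoint_def)
  have Pe: "mat_vec P e = (\<lambda>_. 0)" unfolding e_def mat_vec_scale Pu by simp
  have Pe': "(\<Sum>j\<in>UNIV. P i j * e j) = 0" for i using Pe unfolding mat_vec_def by metis
  have eP': "(\<Sum>j\<in>UNIV. cnj (e j) * P j k) = 0" for k
  proof -
    have "(\<Sum>j\<in>UNIV. cnj (e j) * P j k) = (\<Sum>j\<in>UNIV. cnj (P k j * e j))"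
      by (simp add: Pc mult.commute)
    also have "\<dots> = cnj (\<Sum>j\<in>UNIV. P k j * e j)" by simp
    finally show ?thesis using Pe' by simp
  qed
  have ee': "(\<Sum>j\<in>UNIV. cnj (e j) * e j) = 1" using ee unfolding cinner_def .
  define P' where "P' = (\<lambda>i j. P i j + e i * cnj (e j))"
  have "adjoint P' = P'" unfolding P'_def adjoint_def by (simp add: Pc mult.commute)
  moreover have "mat_mult P' P' = P'"
  proof (intro ext)
    fix i k
    have "mat_mult P' P' i k = (\<Sum>j\<in>UNIV. P i j * P j k + e i * (cnj (e j) * P j k)
          + (P i j * e j) * cnj (e k) + e i * (cnj (e j) * e j) * cnj (e k))"
      unfolding P'_def mat_mult_def by (intro sum.cong refl) (rule ring4)
    also have "\<dots> = mat_mult P P i k + e i * (\<Sum>j\<in>UNIV. cnj (e j) * P j k)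
          + (\<Sum>j\<in>UNIV. P i j * e j) * cnj (e k) + e i * (\<Sum>j\<in>UNIV. cnj (e j) * e j) * cnj (e k)"
      by (simp only: sum.distrib sum_distrib_left sum_distrib_right mat_mult_def)
    also have "\<dots> = P' i k" unfolding eP' Pe' ee' P(2) P'_def by simp
    finally show "mat_mult P' P' i k = P' i k" .
  qed
  moreover have "range (mat_vec P') \<subseteq> S"
  proof
    fix z assume "z \<in> range (mat_vec P')"
    then obtain y where y: "z = mat_vec P' y" by auto
    have "z = (\<lambda>i. mat_vec P y i + cinner e y * e i)"
    proof
      fix i
      have "z i = (\<Sum>j\<in>UNIV. P i j * y j + e i * (cnj (e j) * y j))"
        unfolding y P'_def mat_vec_def by (intro sum.cong refl) (simp add: algebra_simps)
      also have "\<dots> = mat_vec P y i + e i * cinner e y"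
        by (simp only: sum.distrib sum_distrib_left mat_vec_def cinner_def)
      finally show "z i = mat_vec P y i + cinner e y * e i" by (simp add: mult.commute)
    qed
    moreover have "mat_vec P y \<in> S" using P(3) by auto
    ultimately show "z \<in> S" using subsp_add[OF S _ subsp_scale[OF S eS, of "cinner e y"]] by simp
  qed
  moreover have "Re (mat_trace P') = Re (mat_trace P) + 1"
  proof -
    have "mat_trace P' = mat_trace P + cinner e e"
      unfolding P'_def mat_trace_def cinner_def sum.distrib by (simp add: mult.commute)
    then show ?thesis using ee by simp
  qed
  ultimately show ?thesis by blast
qed

lemma orth_proj_exists:
  fixes S :: "('a::finite \<Rightarrow> complex) set"
  assumes S: "subsp S"
  shows "\<exists>P. is_orth_projector P S"
proof -
  have main: "(\<exists>P. adjoint P = P \<and> mat_mult P P = P \<and> range (mat_vec P) \<subseteq> S \<and> Re (mat_trace P) \<ge> real n)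
              \<or> (\<exists>P. is_orth_projector P S)" for n
  proof (induction n)
    case 0
    have "adjoint (zero_mat::'a cmat) = zero_mat" "mat_mult (zero_mat::'a cmat) zero_mat = zero_mat"
      by (simp_all add: adjoint_def zero_mat_def mat_mult_def)
    moreover have "range (mat_vec (zero_mat::'a cmat)) \<subseteq> S"
      using S unfolding subsp_def by (auto simp: mat_vec_def zero_mat_def)
    moreover have "Re (mat_trace (zero_mat::'a cmat)) \<ge> 0" by (simp add: mat_trace_def zero_mat_def)
    ultimately show ?case by (intro disjI1 exI[of _ "zero_mat::'a cmat"]) simp
  next
    case (Suc n)
    then show ?case
    proof
      assume "\<exists>P. adjoint P = P \<and> mat_mult P P = P \<and> range (mat_vec P) \<subseteq> S \<and> Re (mat_trace P) \<ge> real n"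
      then obtain P where P: "adjoint P = P" "mat_mult P P = P" "range (mat_vec P) \<subseteq> S" "Re (mat_trace P) \<ge> real n"
        by blast
      show ?case
      proof (cases "range (mat_vec P) = S")
        case True
        then show ?thesis using P unfolding is_orth_projector_def by blast
      next
        case False
        then obtain x where "x \<in> S" "x \<notin> range (mat_vec P)" using P(3) by blast
        from proj_step[OF S P(1-3) this] obtain P' where
          "adjoint P' = P' \<and> mat_mult P' P' = P' \<and> range (mat_vec P') \<subseteq> S
              \<and> Re (mat_trace P') = Re (mat_trace P) + 1" by blast
        then show ?thesis using P(4) by (intro disjI1 exI[of _ P']) auto
      qed
    next
      assume "\<exists>P. is_orth_projector P S" then show ?case by blast
    qed
  qed
  from main[of "Suc CARD('a)"] show ?thesis
  proof
    assume "\<exists>P. adjoint P = P \<and> mat_mult P P = P \<and> range (mat_vec P) \<subseteq> S \<and> Re (mat_trace P) \<ge> real (Suc CARD('a))"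
    then obtain P :: "'a cmat" where "adjoint P = P" "mat_mult P P = P" "Re (mat_trace P) \<ge> real (Suc CARD('a))"
      by blast
    with proj_trace_le[of P] show ?thesis by simp
  qed
qed

lemma orth_proj_spec:
  assumes "subsp S"
  shows "is_orth_projector (orth_proj S) S"
proof -
  have "\<exists>!P. is_orth_projector P S" by (rule ex_ex1I[OF orth_proj_exists[OF assms] orth_proj_unique])
  then show ?thesis unfolding orth_proj_def by (rule theI')
qed


lemma sum_UNIV_prod: "(\<Sum>z\<in>(UNIV::('a::finite \<times> 'b::finite) set). f z) = (\<Sum>x\<in>UNIV. \<Sum>y\<in>UNIV. f (x, y))"
  by (simp add: sum.cartesian_product UNIV_Times_UNIV[symmetric] del: UNIV_Times_UNIV)

lemma swap23: "(\<Sum>a\<in>A. \<Sum>b\<in>B. \<Sum>c\<in>C. H a b c) = (\<Sum>a\<in>A. \<Sum>c\<in>C. \<Sum>b\<in>B. H a b c)"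
  by (rule sum.cong[OF refl], rule sum.swap)
lemma swap34: "(\<Sum>a\<in>A. \<Sum>b\<in>B. \<Sum>c\<in>C. \<Sum>d\<in>D. H a b c d) = (\<Sum>a\<in>A. \<Sum>b\<in>B. \<Sum>d\<in>D. \<Sum>c\<in>C. H a b c d)"
  by (rule sum.cong[OF refl], rule sum.cong[OF refl], rule sum.swap)

lemma pe_sum4:
  "cinner v (mat_vec (partial_elem \<rho> u u') w) =
   (\<Sum>y\<in>UNIV. \<Sum>y'\<in>UNIV. \<Sum>x\<in>UNIV. \<Sum>x'\<in>UNIV. cnj (u x) * cnj (v y) * \<rho> (x,y) (x',y') * u' x' * w y')"
  unfolding cinner_def mat_vec_def partial_elem_def
  by (simp add: sum_distrib_left sum_distrib_right mult_ac)

lemma tensor_sum4: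
  "cinner (tensor u v) (mat_vec \<rho> (tensor u' w)) =
   (\<Sum>x\<in>UNIV. \<Sum>y\<in>UNIV. \<Sum>x'\<in>UNIV. \<Sum>y'\<in>UNIV. cnj (u x) * cnj (v y) * \<rho> (x,y) (x',y') * u' x' * w y')"
  unfolding cinner_def mat_vec_def tensor_def sum_UNIV_prod
  by (simp add: sum_distrib_left sum_distrib_right mult_ac)

lemma pe_tensor:
  "cinner v (mat_vec (partial_elem \<rho> u u') w) = cinner (tensor u v) (mat_vec \<rho> (tensor u' w))"
  unfolding pe_sum4 tensor_sum4
  by (subst swap23, subst sum.swap, subst swap34, rule refl)

lemma PT_sum4:
  "cinner (tensor a (\<lambda>y. cnj (U y))) (mat_vec (partial_transpose_Y \<rho>) (tensor b (\<lambda>y. cnj (Z y)))) =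
   (\<Sum>x\<in>UNIV. \<Sum>y\<in>UNIV. \<Sum>x'\<in>UNIV. \<Sum>y'\<in>UNIV. cnj (a x) * U y * \<rho> (x,y') (x',y) * b x' * cnj (Z y'))"
  unfolding cinner_def mat_vec_def tensor_def sum_UNIV_prod partial_transpose_Y_def
  by (simp add: sum_distrib_left sum_distrib_right mult_ac)

lemma pe_sum4':
  "cinner Z (mat_vec (partial_elem \<rho> a b) U) =
   (\<Sum>y'\<in>UNIV. \<Sum>y\<in>UNIV. \<Sum>x\<in>UNIV. \<Sum>x'\<in>UNIV. cnj (a x) * U y * \<rho> (x,y') (x',y) * b x' * cnj (Z y'))"
  unfolding cinner_def mat_vec_def partial_elem_def
  by (simp add: sum_distrib_left sum_distrib_right mult_ac)

lemma PT_tensor: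
  "cinner (tensor a (\<lambda>y. cnj (U y))) (mat_vec (partial_transpose_Y \<rho>) (tensor b (\<lambda>y. cnj (Z y)))) =
   cinner Z (mat_vec (partial_elem \<rho> a b) U)"
  unfolding PT_sum4 pe_sum4'
  by (subst swap34, subst swap23, subst sum.swap, subst swap23, rule refl)

lemma tensor_add: "tensor (\<lambda>x. a x + b x) v = (\<lambda>z. tensor a v z + tensor b v z)"
  by (auto simp: tensor_def distrib_right)
lemma tensor_scale: "tensor (\<lambda>x. c * a x) v = (\<lambda>z. c * tensor a v z)"
  by (auto simp: tensor_def)


lemma sum_delta_l: "(\<Sum>j\<in>(UNIV::'a::finite set). (if i = j then 1 else 0) * (f j::complex)) = f i"
proof -
  have "(\<Sum>j\<in>(UNIV::'a set). (if i = j then 1 else 0) * f j) = (\<Sum>j\<in>UNIV. if j = i then f j else 0)"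
    by (rule sum.cong) auto
  also have "\<dots> = f i" by simp
  finally show ?thesis .
qed
lemma sum_delta_r: "(\<Sum>j\<in>(UNIV::'a::finite set). (f j::complex) * (if j = k then 1 else 0)) = f k"
proof -
  have "(\<Sum>j\<in>(UNIV::'a set). f j * (if j = k then 1 else 0)) = (\<Sum>j\<in>UNIV. if j = k then f j else 0)"
    by (rule sum.cong) auto
  also have "\<dots> = f k" by simp
  finally show ?thesis .
qed
lemma mat_mult_id_left: "mat_mult id_mat M = M"
  unfolding mat_mult_def id_mat_def sum_delta_l by simp
lemma mat_mult_id_right: "mat_mult M id_mat = M"
  unfolding mat_mult_def id_mat_def sum_delta_r by simp
lemma mat_mult_diff_left: "mat_mult (\<lambda>i j. A i j - B i j) C = (\<lambda>i k. mat_mult A C i k - mat_mult B C i k)"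
  by (simp add: mat_mult_def left_diff_distrib sum_subtractf)
lemma mat_mult_diff_right: "mat_mult C (\<lambda>i j. A i j - B i j) = (\<lambda>i k. mat_mult C A i k - mat_mult C B i k)"
  by (simp add: mat_mult_def right_diff_distrib sum_subtractf)

lemma proj_meas_two:
  assumes "adjoint P = P" "mat_mult P P = P"
  shows "proj_meas [P, \<lambda>i j. id_mat i j - P i j]"
proof -
  have adjI: "adjoint (id_mat :: 'a cmat) = id_mat" by (auto simp: adjoint_def id_mat_def intro!: ext)
  have a1: "adjoint (\<lambda>i j. id_mat i j - P i j) = (\<lambda>i j. id_mat i j - P i j)"
    using adjI assms(1) unfolding adjoint_def by (metis complex_cnj_diff)
  have m1: "mat_mult (\<lambda>i j. id_mat i j - P i j) (\<lambda>i j. id_mat i j - P i j) = (\<lambda>i j. id_mat i j - P i j)"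
    unfolding mat_mult_diff_left mat_mult_diff_right mat_mult_id_left mat_mult_id_right assms(2)
    by simp
  have s: "(\<lambda>i j. \<Sum>a<length [P, \<lambda>i j. id_mat i j - P i j]. ([P, \<lambda>i j. id_mat i j - P i j] ! a) i j) = id_mat"
    by (simp add: numeral_2_eq_2)
  show ?thesis unfolding proj_meas_def
  proof (intro conjI allI impI s)
    fix a assume "a < length [P, \<lambda>i j. id_mat i j - P i j]"
    then have "a = 0 \<or> a = 1" by auto
    then show "adjoint ([P, \<lambda>i j. id_mat i j - P i j] ! a) = [P, \<lambda>i j. id_mat i j - P i j] ! a"
      "mat_mult ([P, \<lambda>i j. id_mat i j - P i j] ! a) ([P, \<lambda>i j. id_mat i j - P i j] ! a) = [P, \<lambda>i j. id_mat i j - P i j] ! a"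
      using assms a1 m1 by auto
  qed
qed

definition outer :: "('a \<Rightarrow> complex) \<Rightarrow> complex \<Rightarrow> 'a cmat" where
  "outer \<psi> r = (\<lambda>i j. r * (\<psi> i * cnj (\<psi> j)))"

lemma outer_mult: "mat_mult (outer \<psi> r) (outer \<psi> r) = outer \<psi> (r * r * cinner \<psi> \<psi>)"
  unfolding mat_mult_def outer_def cinner_def
  by (intro ext) (simp add: sum_distrib_left sum_distrib_right mult_ac)

lemma outer_proj:
  assumes "cinner \<psi> \<psi> = of_real N" "N > 0"
  shows "adjoint (outer \<psi> (of_real (1/N))) = outer \<psi> (of_real (1/N))"
    "mat_mult (outer \<psi> (of_real (1/N))) (outer \<psi> (of_real (1/N))) = outer \<psi> (of_real (1/N))"
proof -
  show "adjoint (outer \<psi> (of_real (1/N))) = outer \<psi> (of_real (1/N))"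
    by (auto simp: adjoint_def outer_def mult.commute)
  have "(of_real (1/N) * of_real (1/N) * of_real N :: complex) = of_real (1/N)"
    using assms(2) by (simp add: field_simps)
  then show "mat_mult (outer \<psi> (of_real (1/N))) (outer \<psi> (of_real (1/N))) = outer \<psi> (of_real (1/N))"
    unfolding outer_mult assms(1) by simp
qed

lemma assemblage_outer:
  "assemblage \<rho> (outer \<psi> r) = (\<lambda>y y'. r * partial_elem \<rho> \<psi> \<psi> y y')"
  unfolding assemblage_def outer_def partial_elem_def
  by (intro ext, subst sum.swap) (simp add: sum_distrib_left mult_ac)


lemma NPT_part:
  fixes \<rho> :: "('x::finite \<times> 'y::finite) cmat"
  assumes psd: "psd \<rho>"
    and Av: "mat_vec (partial_elem \<rho> \<alpha>0 \<alpha>0) v = (\<lambda>_. 0)"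
    and w: "w = mat_vec (partial_elem \<rho> \<alpha>0 \<alpha>1) v" "w \<noteq> (\<lambda>_. 0)"
  shows "NPT \<rho>"
  unfolding NPT_def
proof
  assume psdT: "psd (partial_transpose_Y \<rho>)"
  define A where "A = partial_elem \<rho> \<alpha>0 \<alpha>0"
  define B where "B = partial_elem \<rho> \<alpha>0 \<alpha>1"
  define B' where "B' = partial_elem \<rho> \<alpha>1 \<alpha>0"
  define D where "D = partial_elem \<rho> \<alpha>1 \<alpha>1"
  define nw where "nw = (\<Sum>i\<in>UNIV. (cmod (w i))\<^sup>2)"
  have ww: "cinner w w = of_real nw" unfolding nw_def by (rule cinner_self)
  have nwpos: "nw > 0"
  proof -
    have "nw \<ge> 0" unfolding nw_def by (rule sum_nonneg) simp
    moreover have "nw \<noteq> 0" using ww w(2) cinner_self_eq0[of w] by auto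
    ultimately show ?thesis by simp
  qed
  define \<delta> where "\<delta> = cinner w (mat_vec D w)"
  define s where "s = (\<bar>Re \<delta>\<bar> + 1) / nw"
  define P where "P = (\<lambda>y. complex_of_real s * v y)"
  define Q where "Q = (\<lambda>y. (-1) * w y)"
  define \<psi> where "\<psi> = (\<lambda>z. tensor \<alpha>0 (\<lambda>y. cnj (P y)) z + tensor \<alpha>1 (\<lambda>y. cnj (Q y)) z)"
  have quad: "cinner \<psi> (mat_vec (partial_transpose_Y \<rho>) \<psi>) =
      cinner P (mat_vec A P) + cinner Q (mat_vec B P) + cinner P (mat_vec B' Q) + cinner Q (mat_vec D Q)"
    unfolding \<psi>_def mat_vec_add cinner_add_left cinner_add_right PT_tensor A_def B_def B'_def D_def
    by simp
  have t1: "cinner P (mat_vec A P) = 0"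
    unfolding P_def mat_vec_scale using Av unfolding A_def by simp
  have t2: "cinner Q (mat_vec B P) = - (of_real s * of_real nw)"
    unfolding P_def Q_def mat_vec_scale cinner_scale_left cinner_scale_right
    using ww w(1) unfolding B_def by simp
  have herm: "cinner v (mat_vec B' w) = cinner w w"
  proof -
    have "cinner v (mat_vec B' w) = cinner (tensor \<alpha>1 v) (mat_vec \<rho> (tensor \<alpha>0 w))"
      unfolding B'_def by (rule pe_tensor)
    also have "\<dots> = cnj (cinner (tensor \<alpha>0 w) (mat_vec \<rho> (tensor \<alpha>1 v)))"
      by (rule psd_herm[OF psd])
    also have "\<dots> = cnj (cinner w (mat_vec B v))"
      unfolding B_def pe_tensor ..
    also have "\<dots> = cnj (cinner w w)" using w(1) unfolding B_def by simp
    also have "\<dots> = cinner w w" using ww by simp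
    finally show ?thesis .
  qed
  have t3: "cinner P (mat_vec B' Q) = - (of_real s * of_real nw)"
    unfolding P_def Q_def mat_vec_scale cinner_scale_left cinner_scale_right herm ww
    by simp
  have t4: "cinner Q (mat_vec D Q) = \<delta>"
    unfolding Q_def mat_vec_scale cinner_scale_left cinner_scale_right \<delta>_def by simp
  have tot: "Re (cinner \<psi> (mat_vec (partial_transpose_Y \<rho>) \<psi>)) = - 2 * s * nw + Re \<delta>"
    unfolding quad t1 t2 t3 t4 by simp
  have "s * nw = \<bar>Re \<delta>\<bar> + 1" unfolding s_def using nwpos by simp
  then have "Re (cinner \<psi> (mat_vec (partial_transpose_Y \<rho>) \<psi>)) < 0" unfolding tot by linarith
  moreover have "Re (cinner \<psi> (mat_vec (partial_transpose_Y \<rho>) \<psi>)) \<ge> 0" by (rule psd_Re_nonneg[OF psdT])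
  ultimately show False by simp
qed


lemma kernel_subsp: "subsp (mat_kernel A)"
  unfolding subsp_def mat_kernel_def by (auto simp: mat_vec_add mat_vec_scale)

lemma extract_v:
  assumes "mat_mult (mat_mult PR B) (orth_proj (mat_kernel A)) \<noteq> zero_mat"
  shows "\<exists>v. mat_vec A v = (\<lambda>_. 0) \<and> mat_vec B v \<noteq> (\<lambda>_. 0)"
proof (rule ccontr)
  assume "\<not> ?thesis"
  then have h: "\<And>v. mat_vec A v = (\<lambda>_. 0) \<Longrightarrow> mat_vec B v = (\<lambda>_. 0)" by blast
  define PK where "PK = orth_proj (mat_kernel A)"
  have PK: "range (mat_vec PK) = mat_kernel A"
    using orth_proj_spec[OF kernel_subsp] unfolding PK_def is_orth_projector_def by blast
  have "mat_mult B PK = zero_mat"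
  proof (rule mat_eqI)
    fix x
    have "mat_vec PK x \<in> mat_kernel A" using PK by blast
    then have "mat_vec B (mat_vec PK x) = (\<lambda>_. 0)" using h unfolding mat_kernel_def by blast
    then show "mat_vec (mat_mult B PK) x = mat_vec zero_mat x"
      unfolding mat_vec_mult by (simp add: mat_vec_def zero_mat_def)
  qed
  then have "mat_mult (mat_mult PR B) PK = zero_mat"
    by (simp add: mat_mult_assoc mat_mult_zero_right)
  then show False using assms unfolding PK_def by simp
qed


lemma small_set:
  fixes f :: "'l \<Rightarrow> real"
  assumes P: "prob_space \<mu>" and f: "f \<in> borel_measurable \<mu>" and d: "(\<delta>::real) > 0"
  shows "\<exists>\<epsilon>>0. \<epsilon> \<le> 1 \<and> {l\<in>space \<mu>. 0 < f l \<and> f l \<le> \<epsilon>} \<in> sets \<mu>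
           \<and> measure \<mu> {l\<in>space \<mu>. 0 < f l \<and> f l \<le> \<epsilon>} < \<delta>"
proof -
  interpret prob_space \<mu> by (rule P)
  define E where "E = (\<lambda>n::nat. {l\<in>space \<mu>. 0 < f l \<and> f l \<le> 1 / real (Suc n)})"
  have Es: "E n \<in> sets \<mu>" for n unfolding E_def using f by measurable
  have dec: "decseq E"
  proof (rule decseq_SucI)
    fix n
    have "1 / real (Suc (Suc n)) \<le> 1 / real (Suc n)" by (simp add: frac_le)
    then show "E (Suc n) \<subseteq> E n" unfolding E_def by auto
  qed
  have empty: "(\<Inter>i. E i) = {}"
  proof (rule ccontr)
    assume "(\<Inter>i. E i) \<noteq> {}"
    then obtain l where l: "\<And>i. l \<in> E i" by blast
    then have fl: "0 < f l" unfolding E_def by auto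
    obtain n where n: "inverse (real (Suc n)) < f l" using reals_Archimedean[OF fl] by blast
    have "f l \<le> 1 / real (Suc n)" using l[of n] unfolding E_def by auto
    then show False using n by (simp add: inverse_eq_divide)
  qed
  have "(\<lambda>n. measure \<mu> (E n)) \<longlonglongrightarrow> measure \<mu> (\<Inter>i. E i)"
    by (rule finite_Lim_measure_decseq) (use Es dec in auto)
  then have "(\<lambda>n. measure \<mu> (E n)) \<longlonglongrightarrow> 0" unfolding empty by simp
  then obtain N where "\<forall>n\<ge>N. dist (measure \<mu> (E n)) 0 < \<delta>"
    using d by (meson LIMSEQ_def)
  then have "measure \<mu> (E N) < \<delta>" by auto
  moreover have "1 / real (Suc N) > 0" "1 / real (Suc N) \<le> 1" by auto
  ultimately show ?thesis using Es[of N] unfolding E_def by blast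
qed

lemma avg_le: "(g::real) \<le> (a + b) / 2 \<Longrightarrow> a \<le> b \<Longrightarrow> g \<le> b"
  by (simp add: field_simps)

lemma pw_bound:
  fixes g f h H \<epsilon> \<eta> :: real
  assumes f: "0 \<le> f" and h: "0 \<le> h" "h \<le> H" and g: "0 \<le> g"
    and pw: "\<forall>\<eta>>0. g \<le> (\<eta> * h + f / \<eta>) / 2"
    and e: "0 < \<epsilon>" "\<epsilon> \<le> 1" and eta: "\<eta> > 0"
  shows "g \<le> (H + 1) / \<epsilon> * f + \<eta> / 2 * H * (if 0 < f \<and> f \<le> \<epsilon> then 1 else 0) + f / (2 * \<eta>)"
proof -
  have H0: "H \<ge> 0" using h by simp
  have t1: "0 \<le> (H + 1) / \<epsilon> * f" using H0 e f by simp
  have t2: "0 \<le> \<eta> / 2 * H * (if 0 < f \<and> f \<le> \<epsilon> then 1 else 0)" using H0 eta by simp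
  have t3: "0 \<le> f / (2 * \<eta>)" using f eta by simp
  consider "f = 0" | "0 < f \<and> f \<le> \<epsilon>" | "f > \<epsilon>" using f by linarith
  then show ?thesis
  proof cases
    case 1
    have "g \<le> 0"
    proof (rule ccontr)
      assume "\<not> g \<le> 0"
      then have gp: "g > 0" by simp
      define e' where "e' = g / (H + 1)"
      have e'p: "e' > 0" unfolding e'_def using gp H0 by simp
      have "g \<le> (e' * h + f / e') / 2" using pw e'p by blast
      then have "g \<le> e' * h / 2" using 1 by simp
      also have "\<dots> \<le> e' * H / 2" using e'p h by simp
      also have "\<dots> = g * (H / (2 * (H + 1)))" unfolding e'_def by simp
      also have "\<dots> < g * 1"
        using gp H0 by (intro mult_strict_left_mono) (auto simp: field_simps)
      finally show False by simp
    qed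
    then show ?thesis using t1 t2 t3 by linarith
  next
    case 2
    have "g \<le> (\<eta> * h + f / \<eta>) / 2" using pw eta by blast
    also have "\<dots> \<le> \<eta> / 2 * H + f / (2 * \<eta>)" using h eta by (simp add: field_simps)
    finally show ?thesis using 2 t1 by simp
  next
    case 3
    define e' where "e' = \<epsilon> / (H + 1)"
    have e'p: "e' > 0" unfolding e'_def using e H0 by simp
    have "g \<le> (e' * h + f / e') / 2" using pw e'p by blast
    moreover have "e' * h \<le> \<epsilon>"
    proof -
      have "e' * h \<le> e' * H" using e'p h by simp
      also have "\<dots> = \<epsilon> * (H / (H + 1))" unfolding e'_def by simp
      also have "\<dots> \<le> \<epsilon> * 1" using e H0 by (intro mult_left_mono) auto
      finally show ?thesis by simp
    qed
    moreover have "f \<le> f / e'"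
    proof -
      have "1 \<le> 1 / e'" unfolding e'_def using e H0 by (simp add: field_simps)
      then have "f * 1 \<le> f * (1 / e')" using f by (intro mult_left_mono) auto
      then show ?thesis by simp
    qed
    ultimately have "g \<le> f / e'" using 3 avg_le[of g "e' * h" "f / e'"] by linarith
    also have "f / e' = (H + 1) / \<epsilon> * f" unfolding e'_def using e H0 by (simp add: field_simps)
    finally show ?thesis using t2 t3 by linarith
  qed
qed


lemma core_contra:
  fixes \<mu> :: "'l measure" and f h :: "'l \<Rightarrow> real" and g :: "'l \<Rightarrow> complex"
  assumes P: "prob_space \<mu>"
    and fm: "f \<in> borel_measurable \<mu>" and hm: "h \<in> borel_measurable \<mu>" and gm: "g \<in> borel_measurable \<mu>"
    and bnd: "\<forall>l\<in>space \<mu>. 0 \<le> f l \<and> f l \<le> F \<and> 0 \<le> h l \<and> h l \<le> H"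
    and pw: "\<forall>l\<in>space \<mu>. \<forall>\<eta>>0. cmod (g l) \<le> (\<eta> * h l + f l / \<eta>) / 2"
    and resp: "\<forall>t. 0 < t \<longrightarrow> t \<le> 1 \<longrightarrow> (\<exists>q\<in>borel_measurable \<mu>. (\<forall>l\<in>space \<mu>. 0 \<le> q l \<and> q l \<le> 1)
                 \<and> \<beta> * t - K * t\<^sup>2 \<le> cmod (LINT l|\<mu>. complex_of_real (q l) * g l)
                 \<and> (LINT l|\<mu>. q l * f l) \<le> C * t\<^sup>2)"
    and \<beta>: "\<beta> > 0" and K: "K \<ge> 0" and C: "C \<ge> 0"
  shows False
proof -
  interpret prob_space \<mu> by (rule P)
  have H0: "H \<ge> 0" "F \<ge> 0"
  proof -
    obtain l where "l \<in> space \<mu>" using not_empty by blast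
    then show "H \<ge> 0" "F \<ge> 0" using bnd by force+
  qed
  define k where "k = 2 * C / \<beta> + 1"
  have "0 \<le> 2 * C / \<beta>" using C \<beta> by simp
  then have kpos: "k > 0" unfolding k_def by linarith
  have kC: "C / (2 * k) \<le> \<beta> / 4"
  proof -
    have "C / (2 * k) * (4 * k) = 2 * C" using kpos by simp
    also have "\<dots> \<le> \<beta> / 4 * (4 * k)" unfolding k_def using \<beta> by (simp add: field_simps)
    finally have "C / (2 * k) * (4 * k) \<le> \<beta> / 4 * (4 * k)" .
    then show ?thesis by (rule mult_right_le_imp_le) (use kpos in simp)
  qed
  define \<delta> where "\<delta> = \<beta> / (2 * k * (H + 1))"
  have dpos: "\<delta> > 0" unfolding \<delta>_def using \<beta> kpos H0 by simp
  obtain \<epsilon> where e: "\<epsilon> > 0" "\<epsilon> \<le> 1" and Es: "{l\<in>space \<mu>. 0 < f l \<and> f l \<le> \<epsilon>} \<in> sets \<mu>"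
    and Em: "measure \<mu> {l\<in>space \<mu>. 0 < f l \<and> f l \<le> \<epsilon>} < \<delta>"
    using small_set[OF P fm dpos] by blast
  define E where "E = {l\<in>space \<mu>. 0 < f l \<and> f l \<le> \<epsilon>}"
  define s where "s = (H + 1) / \<epsilon>"
  have s0: "s \<ge> 0" unfolding s_def using H0 e by simp
  define M where "M = s * C + K"
  have M0: "M \<ge> 0" unfolding M_def using s0 C K by simp
  define t where "t = min 1 (\<beta> / (4 * M + 1))"
  have t: "0 < t" "t \<le> 1" unfolding t_def using \<beta> M0 by auto
  have Mt: "M * t < \<beta> / 4"
  proof -
    have "M * t \<le> M * (\<beta> / (4 * M + 1))" unfolding t_def using M0 by (intro mult_left_mono) auto
    also have "\<dots> < \<beta> / 4" using M0 \<beta> by (simp add: field_simps)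
    finally show ?thesis .
  qed
  obtain q where qm: "q \<in> borel_measurable \<mu>" and q01: "\<forall>l\<in>space \<mu>. 0 \<le> q l \<and> q l \<le> 1"
    and low: "\<beta> * t - K * t\<^sup>2 \<le> cmod (LINT l|\<mu>. complex_of_real (q l) * g l)"
    and Yb: "(LINT l|\<mu>. q l * f l) \<le> C * t\<^sup>2"
    using resp t by blast
  define Y where "Y = (LINT l|\<mu>. q l * f l)"
  define \<eta> where "\<eta> = k * t"
  have eta: "\<eta> > 0" unfolding \<eta>_def using kpos t by simp
  have gb: "cmod (g l) \<le> (H + F) / 2" if "l \<in> space \<mu>" for l
  proof -
    have "\<forall>\<eta>>0. cmod (g l) \<le> (\<eta> * h l + f l / \<eta>) / 2" using pw that by blast
    then have "cmod (g l) \<le> (1 * h l + f l / 1) / 2" by (meson zero_less_one)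
    also have "\<dots> \<le> (H + F) / 2"
    proof -
      have "h l + f l \<le> H + F" using bnd that by force
      then show ?thesis by simp
    qed
    finally show ?thesis .
  qed
  have int1: "integrable \<mu> (\<lambda>l. complex_of_real (q l) * g l)"
  proof (rule integrable_const_bound[where B = "(H + F) / 2"])
    show "AE l in \<mu>. norm (complex_of_real (q l) * g l) \<le> (H + F) / 2"
    proof (rule AE_I2)
      fix l assume l: "l \<in> space \<mu>"
      have "norm (complex_of_real (q l) * g l) = q l * cmod (g l)" using q01 l by (simp add: norm_mult)
      also have "\<dots> \<le> 1 * cmod (g l)" using q01 l by (intro mult_right_mono) auto
      also have "\<dots> \<le> (H + F) / 2" using gb l by simp
      finally show "norm (complex_of_real (q l) * g l) \<le> (H + F) / 2" .
    qed
    show "(\<lambda>l. complex_of_real (q l) * g l) \<in> borel_measurable \<mu>" using qm gm by measurable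
  qed
  have intqf: "integrable \<mu> (\<lambda>l. q l * f l)"
  proof (rule integrable_const_bound[where B = F])
    show "AE l in \<mu>. norm (q l * f l) \<le> F"
    proof (rule AE_I2)
      fix l assume l: "l \<in> space \<mu>"
      have "norm (q l * f l) = q l * f l" using q01 bnd l by simp
      also have "\<dots> \<le> 1 * F" using q01 bnd l by (intro mult_mono) auto
      finally show "norm (q l * f l) \<le> F" by simp
    qed
    show "(\<lambda>l. q l * f l) \<in> borel_measurable \<mu>" using qm fm by measurable
  qed
  have intE: "integrable \<mu> (indicator E :: 'l \<Rightarrow> real)"
    using Es unfolding E_def by (intro integrable_real_indicator) (auto simp: less_top[symmetric])
  define Bd where "Bd = (\<lambda>l. s * (q l * f l) + (\<eta> / 2 * H) * indicator E l + (q l * f l) / (2 * \<eta>))"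
  have intBd: "integrable \<mu> Bd" unfolding Bd_def using intqf intE by auto
  have intBd_eq: "integral\<^sup>L \<mu> Bd = s * Y + (\<eta> / 2 * H) * measure \<mu> E + Y / (2 * \<eta>)"
  proof -
    have EE: "E \<inter> space \<mu> = E" unfolding E_def by auto
    show ?thesis unfolding Bd_def Y_def using intqf intE EE by simp
  qed
  have intqg: "integrable \<mu> (\<lambda>l. q l * cmod (g l))"
  proof -
    have "integrable \<mu> (\<lambda>l. norm (complex_of_real (q l) * g l))" using int1 by simp
    moreover have "\<And>l. l \<in> space \<mu> \<Longrightarrow> norm (complex_of_real (q l) * g l) = q l * cmod (g l)"
      using q01 by (simp add: norm_mult)
    moreover have "integrable \<mu> (\<lambda>l. norm (complex_of_real (q l) * g l)) = integrable \<mu> (\<lambda>l. q l * cmod (g l))"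
    proof (rule Bochner_Integration.integrable_cong[OF refl])
      fix l assume "l \<in> space \<mu>"
      then show "norm (complex_of_real (q l) * g l) = q l * cmod (g l)" using q01 by (simp add: norm_mult)
    qed
    ultimately show ?thesis by simp
  qed
  have "cmod (LINT l|\<mu>. complex_of_real (q l) * g l) \<le> (LINT l|\<mu>. norm (complex_of_real (q l) * g l))"
    by (rule integral_norm_bound)
  also have "\<dots> = (LINT l|\<mu>. q l * cmod (g l))"
  proof (rule Bochner_Integration.integral_cong[OF refl])
    fix l assume "l \<in> space \<mu>"
    then show "norm (complex_of_real (q l) * g l) = q l * cmod (g l)" using q01 by (simp add: norm_mult)
  qed
  also have "\<dots> \<le> integral\<^sup>L \<mu> Bd"
  proof (rule integral_mono[OF intqg intBd])
    fix l assume l: "l \<in> space \<mu>"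
    have pb: "cmod (g l) \<le> (H + 1) / \<epsilon> * f l + \<eta> / 2 * H * (if 0 < f l \<and> f l \<le> \<epsilon> then 1 else 0) + f l / (2 * \<eta>)"
      using pw_bound[of "f l" "h l" H "cmod (g l)" \<epsilon> \<eta>] bnd pw l e eta by auto
    have "q l * cmod (g l) \<le> q l * ((H + 1) / \<epsilon> * f l + \<eta> / 2 * H * (if 0 < f l \<and> f l \<le> \<epsilon> then 1 else 0) + f l / (2 * \<eta>))"
      using q01 l pb by (intro mult_left_mono) auto
    also have "\<dots> = s * (q l * f l) + q l * (\<eta> / 2 * H * indicator E l) + (q l * f l) / (2 * \<eta>)"
      unfolding s_def E_def using l by (simp add: algebra_simps indicator_def)
    also have "q l * (\<eta> / 2 * H * indicator E l) \<le> 1 * (\<eta> / 2 * H * indicator E l)"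
      using q01 l eta H0 by (intro mult_right_mono) auto
    finally show "q l * cmod (g l) \<le> Bd l" unfolding Bd_def by simp
  qed
  also have "\<dots> = s * Y + (\<eta> / 2 * H) * measure \<mu> E + Y / (2 * \<eta>)" by (rule intBd_eq)
  also have "\<dots> \<le> s * (C * t\<^sup>2) + \<beta> / 4 * t + \<beta> / 4 * t"
  proof -
    have a: "s * Y \<le> s * (C * t\<^sup>2)" using Yb s0 unfolding Y_def by (intro mult_left_mono)
    have "(\<eta> / 2 * H) * measure \<mu> E \<le> (\<eta> / 2 * H) * \<delta>"
      using Em eta H0 unfolding E_def by (intro mult_left_mono) auto
    also have "\<dots> = t * (\<beta> / 4 * (H / (H + 1)))" unfolding \<eta>_def \<delta>_def using kpos H0 by (simp add: divide_simps)
    also have "\<dots> \<le> t * (\<beta> / 4 * 1)" using t \<beta> H0 by (intro mult_left_mono) auto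
    finally have b: "(\<eta> / 2 * H) * measure \<mu> E \<le> \<beta> / 4 * t" by (simp add: mult.commute)
    have "Y / (2 * \<eta>) \<le> C * t\<^sup>2 / (2 * \<eta>)" using Yb eta unfolding Y_def by (intro divide_right_mono) auto
    also have "\<dots> = C / (2 * k) * t" unfolding \<eta>_def using kpos t by (simp add: power2_eq_square field_simps)
    also have "\<dots> \<le> \<beta> / 4 * t" using kC t by (intro mult_right_mono) auto
    finally have c: "Y / (2 * \<eta>) \<le> \<beta> / 4 * t" .
    show ?thesis using a b c by linarith
  qed
  finally have up: "cmod (LINT l|\<mu>. complex_of_real (q l) * g l) \<le> s * (C * t\<^sup>2) + \<beta> / 4 * t + \<beta> / 4 * t" .
  have "\<beta> * t - K * t\<^sup>2 \<le> s * (C * t\<^sup>2) + \<beta> / 4 * t + \<beta> / 4 * t" using low up by linarith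
  then have "\<beta> / 2 * t \<le> M * t * t" unfolding M_def by (simp add: field_simps power2_eq_square)
  then have "\<beta> / 2 \<le> M * t" using t by (simp add: mult_le_cancel_right)
  then show False using Mt \<beta> by (simp add: field_simps)
qed


lemma cinner_evec: "cinner (evec i) x = x i"
proof -
  have "cinner (evec i) x = (\<Sum>j\<in>UNIV. if j = i then x j else 0)"
    unfolding cinner_def by (rule sum.cong) (auto simp: evec_def)
  then show ?thesis by simp
qed

lemma density_entry_bound:
  assumes "density_matrix \<tau>"
  shows "cmod (\<tau> i j) \<le> 1"
proof -
  have psd: "psd \<tau>" and tr: "mat_trace \<tau> = 1" using assms unfolding density_matrix_def by auto
  have diag: "\<tau> k k = of_real (Re (\<tau> k k))" "Re (\<tau> k k) \<ge> 0" for k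
    using psd_real[OF psd, of "evec k"] psd_Re_nonneg[OF psd, of "evec k"]
    unfolding cinner_evec mat_vec_evec by auto
  have le1: "Re (\<tau> k k) \<le> 1" for k
  proof -
    have "Re (\<tau> k k) \<le> (\<Sum>m\<in>UNIV. Re (\<tau> m m))"
      using diag(2) by (intro member_le_sum) auto
    also have "\<dots> = Re (mat_trace \<tau>)" unfolding mat_trace_def by simp
    finally show ?thesis using tr by simp
  qed
  have "cmod (cinner (evec i) (mat_vec \<tau> (evec j))) \<le>
        (1 * Re (cinner (evec i) (mat_vec \<tau> (evec i))) + Re (cinner (evec j) (mat_vec \<tau> (evec j))) / 1) / 2"
    by (rule psd_cs[OF psd]) simp
  then have "cmod (\<tau> i j) \<le> (Re (\<tau> i i) + Re (\<tau> j j)) / 2"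
    unfolding cinner_evec mat_vec_evec by simp
  also have "\<dots> \<le> 1" using le1[of i] le1[of j] by simp
  finally show ?thesis .
qed

lemma form_bound:
  assumes "\<And>i j. cmod (M i j) \<le> 1"
  shows "cmod (cinner a (mat_vec M b)) \<le> (\<Sum>i\<in>UNIV. cmod (a i)) * (\<Sum>j\<in>UNIV. cmod (b j))"
proof -
  have "cmod (cinner a (mat_vec M b)) \<le> (\<Sum>i\<in>UNIV. cmod (cnj (a i) * (\<Sum>j\<in>UNIV. M i j * b j)))"
    unfolding cinner_def mat_vec_def by (rule norm_sum)
  also have "\<dots> \<le> (\<Sum>i\<in>UNIV. cmod (a i) * (\<Sum>j\<in>UNIV. cmod (b j)))"
  proof (rule sum_mono)
    fix i
    have "cmod (\<Sum>j\<in>UNIV. M i j * b j) \<le> (\<Sum>j\<in>UNIV. cmod (M i j * b j))" by (rule norm_sum)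
    also have "\<dots> \<le> (\<Sum>j\<in>UNIV. cmod (b j))"
    proof (rule sum_mono)
      fix j
      have "cmod (M i j * b j) = cmod (M i j) * cmod (b j)" by (simp add: norm_mult)
      also have "\<dots> \<le> 1 * cmod (b j)" using assms by (intro mult_right_mono) auto
      finally show "cmod (M i j * b j) \<le> cmod (b j)" by simp
    qed
    finally have "cmod (\<Sum>j\<in>UNIV. M i j * b j) \<le> (\<Sum>j\<in>UNIV. cmod (b j))" .
    then show "cmod (cnj (a i) * (\<Sum>j\<in>UNIV. M i j * b j)) \<le> cmod (a i) * (\<Sum>j\<in>UNIV. cmod (b j))"
      by (simp add: norm_mult mult_left_mono)
  qed
  also have "\<dots> = (\<Sum>i\<in>UNIV. cmod (a i)) * (\<Sum>j\<in>UNIV. cmod (b j))" by (simp add: sum_distrib_right)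
  finally show ?thesis .
qed

lemma form_measurable:
  assumes "\<And>y y'. (\<lambda>l. \<tau> l y y') \<in> borel_measurable \<mu>"
  shows "(\<lambda>l. cinner a (mat_vec (\<tau> l) b)) \<in> borel_measurable \<mu>"
  unfolding cinner_def mat_vec_def using assms by measurable

lemma integral_cinner:
  assumes "\<And>y y'. integrable \<mu> (\<lambda>l. F l y y')"
  shows "cinner a (mat_vec (\<lambda>y y'. LINT l|\<mu>. F l y y') b) = (LINT l|\<mu>. cinner a (mat_vec (F l) b))"
proof -
  have i1: "integrable \<mu> (\<lambda>l. F l y y' * b y')" for y y' using assms by simp
  have i2: "integrable \<mu> (\<lambda>l. \<Sum>y'\<in>UNIV. F l y y' * b y')" for y using i1 by simp
  have i3: "integrable \<mu> (\<lambda>l. cnj (a y) * (\<Sum>y'\<in>UNIV. F l y y' * b y'))" for y using i2 by simp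
  have "(LINT l|\<mu>. cinner a (mat_vec (F l) b)) = (\<Sum>y\<in>UNIV. LINT l|\<mu>. cnj (a y) * (\<Sum>y'\<in>UNIV. F l y y' * b y'))"
    unfolding cinner_def mat_vec_def by (rule Bochner_Integration.integral_sum) (use i3 in auto)
  also have "\<dots> = (\<Sum>y\<in>UNIV. cnj (a y) * (\<Sum>y'\<in>UNIV. (LINT l|\<mu>. F l y y') * b y'))"
  proof (rule sum.cong[OF refl])
    fix y
    have "(LINT l|\<mu>. (\<Sum>y'\<in>UNIV. F l y y' * b y')) = (\<Sum>y'\<in>UNIV. LINT l|\<mu>. F l y y' * b y')"
      by (rule Bochner_Integration.integral_sum) (use i1 in auto)
    then show "(LINT l|\<mu>. cnj (a y) * (\<Sum>y'\<in>UNIV. F l y y' * b y')) = cnj (a y) * (\<Sum>y'\<in>UNIV. (LINT l|\<mu>. F l y y') * b y')"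
      by simp
  qed
  finally show ?thesis unfolding cinner_def mat_vec_def by simp
qed


lemma pe_expand:
  "cinner a (mat_vec (partial_elem \<rho> (\<lambda>x. \<alpha>0 x + z * \<alpha>1 x) (\<lambda>x. \<alpha>0 x + z * \<alpha>1 x)) b) =
     cinner a (mat_vec (partial_elem \<rho> \<alpha>0 \<alpha>0) b) + z * cinner a (mat_vec (partial_elem \<rho> \<alpha>0 \<alpha>1) b)
   + cnj z * cinner a (mat_vec (partial_elem \<rho> \<alpha>1 \<alpha>0) b) + cnj z * z * cinner a (mat_vec (partial_elem \<rho> \<alpha>1 \<alpha>1) b)"
  unfolding pe_tensor tensor_add tensor_scale mat_vec_add mat_vec_scale cinner_add_left cinner_add_right
    cinner_scale_left cinner_scale_right
  by (simp add: algebra_simps)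

lemma gamma_zero:
  assumes h: "\<And>t::real. \<exists>r\<ge>0. of_real t * \<gamma> + of_real (t^2) * d = complex_of_real r"
  shows "\<gamma> = 0"
proof -
  have re: "0 \<le> t * Re \<gamma> + t^2 * Re d" and im: "t * Im \<gamma> + t^2 * Im d = 0" for t :: real
  proof -
    obtain r where "r \<ge> 0" "of_real t * \<gamma> + of_real (t^2) * d = complex_of_real r" using h by blast
    then have "Re (of_real t * \<gamma> + of_real (t^2) * d) = r" "Im (of_real t * \<gamma> + of_real (t^2) * d) = 0"
      by (metis Re_complex_of_real, metis Im_complex_of_real)
    then show "0 \<le> t * Re \<gamma> + t^2 * Re d" "t * Im \<gamma> + t^2 * Im d = 0" using \<open>r \<ge> 0\<close> by simp_all
  qed
  have i1: "Im \<gamma> + Im d = 0" using im[of 1] by simp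
  have i2: "- Im \<gamma> + Im d = 0" using im[of "-1"] by simp
  have imz: "Im \<gamma> = 0" using i1 i2 by linarith
  have rez: "Re \<gamma> = 0"
  proof (rule ccontr)
    assume a: "Re \<gamma> \<noteq> 0"
    define D where "D = \<bar>Re d\<bar> + 1"
    have D: "D > 0" unfolding D_def by simp
    define t where "t = - Re \<gamma> / D"
    have "t * Re \<gamma> + t^2 * Re d \<le> t * Re \<gamma> + t^2 * \<bar>Re d\<bar>"
      by (intro add_left_mono mult_left_mono) auto
    also have "\<dots> = (Re \<gamma>)^2 * (\<bar>Re d\<bar> - D) / D^2"
      unfolding t_def using D by (simp add: field_simps power2_eq_square)
    also have "\<dots> = - ((Re \<gamma>)^2 / D^2)" unfolding D_def by (simp add: field_simps)
    also have "\<dots> < 0" using a D by simp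
    finally show False using re[of t] by simp
  qed
  show ?thesis using imz rez by (simp add: complex_eq_iff)
qed

lemma lower_bound:
  fixes t :: real
  assumes t: "0 < t" "t \<le> 1"
  shows "cmod \<beta> * t - (cmod \<beta> + cmod b3) * t\<^sup>2 \<le> cmod ((of_real t * \<beta> + of_real (t\<^sup>2) * b3) / of_real (1 + t\<^sup>2))"
proof -
  define n where "n = t * cmod \<beta> - t\<^sup>2 * cmod b3"
  have N: "1 + t\<^sup>2 > 0" by (simp add: add_pos_nonneg)
  have "n \<le> cmod (of_real t * \<beta> + of_real (t\<^sup>2) * b3)"
  proof -
    have "cmod (of_real t * \<beta>) - cmod (of_real (t\<^sup>2) * b3) \<le> cmod (of_real t * \<beta> + of_real (t\<^sup>2) * b3)"
      by (metis norm_diff_ineq diff_minus_eq_add norm_minus_cancel)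
    then show ?thesis unfolding n_def using t by (simp add: norm_mult norm_power)
  qed
  then have a0: "n / (1 + t\<^sup>2) \<le> cmod (of_real t * \<beta> + of_real (t\<^sup>2) * b3) / (1 + t\<^sup>2)"
    using N by (intro divide_right_mono) auto
  have nd: "cmod ((of_real t * \<beta> + of_real (t\<^sup>2) * b3) / complex_of_real (1 + t\<^sup>2))
      = cmod (of_real t * \<beta> + of_real (t\<^sup>2) * b3) / \<bar>1 + t\<^sup>2\<bar>"
    by (simp only: norm_divide norm_of_real)
  have a: "n / (1 + t\<^sup>2) \<le> cmod ((of_real t * \<beta> + of_real (t\<^sup>2) * b3) / of_real (1 + t\<^sup>2))"
    unfolding nd using a0 N by simp
  have "n - n / (1 + t\<^sup>2) = n * (t\<^sup>2 / (1 + t\<^sup>2))" using N by (simp add: field_simps)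
  also have "\<dots> \<le> (t * cmod \<beta>) * (t\<^sup>2 / (1 + t\<^sup>2))"
    unfolding n_def by (intro mult_right_mono) auto
  also have "\<dots> \<le> t\<^sup>2 * cmod \<beta>"
  proof -
    have "t * (t\<^sup>2 / (1 + t\<^sup>2)) \<le> t\<^sup>2"
    proof -
      have h1: "t * t\<^sup>2 \<le> 1 * t\<^sup>2" using t by (intro mult_right_mono) auto
      have h2: "0 \<le> t\<^sup>2 * t\<^sup>2" by simp
      have h3: "t\<^sup>2 * (1 + t\<^sup>2) = t\<^sup>2 + t\<^sup>2 * t\<^sup>2" by (simp add: distrib_left)
      have "t * t\<^sup>2 \<le> t\<^sup>2 * (1 + t\<^sup>2)" using h1 h2 h3 by linarith
      then show ?thesis using N by (simp add: field_simps)
    qed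
    then have "(t * (t\<^sup>2 / (1 + t\<^sup>2))) * cmod \<beta> \<le> t\<^sup>2 * cmod \<beta>" by (intro mult_right_mono) auto
    then show ?thesis by (simp add: mult_ac)
  qed
  finally have "n - t\<^sup>2 * cmod \<beta> \<le> n / (1 + t\<^sup>2)" by simp
  then show ?thesis using a unfolding n_def by (simp add: algebra_simps)
qed


lemma mat_vec_smat: "mat_vec (\<lambda>i j. r * M i j) b = (\<lambda>i. r * mat_vec M b i)"
  by (simp add: mat_vec_def sum_distrib_left mult.assoc)

lemma norm_psi:
  assumes on: "cinner \<alpha>0 \<alpha>0 = 1" "cinner \<alpha>1 \<alpha>1 = 1" "cinner \<alpha>0 \<alpha>1 = 0" and c: "cmod c = 1"
  shows "cinner (\<lambda>x. \<alpha>0 x + (of_real t * c) * \<alpha>1 x) (\<lambda>x. \<alpha>0 x + (of_real t * c) * \<alpha>1 x) = of_real (1 + t\<^sup>2)"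
proof -
  have on2: "cinner \<alpha>1 \<alpha>0 = 0" using on(3) cinner_sym[of \<alpha>1 \<alpha>0] by simp
  have zz: "cnj (of_real t * c) * (of_real t * c) = of_real (t\<^sup>2)"
  proof -
    have "cnj (of_real t * c) * (of_real t * c) = of_real (t * t) * (cnj c * c)" by (simp add: mult_ac)
    also have "cnj c * c = of_real ((cmod c)\<^sup>2)" by (metis complex_norm_square mult.commute)
    finally show ?thesis using c by (simp add: power2_eq_square)
  qed
  show ?thesis
    unfolding cinner_add_left cinner_add_right cinner_scale_left cinner_scale_right on on2
    using zz by (simp add: mult.assoc[symmetric])
qed

lemma response:
  fixes \<rho> :: "('x::finite \<times> 'y::finite) cmat" and \<mu> :: "'l measure"
  assumes on: "cinner \<alpha>0 \<alpha>0 = 1" "cinner \<alpha>1 \<alpha>1 = 1" "cinner \<alpha>0 \<alpha>1 = 0" and c: "cmod c = 1"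
    and model: "LHS_model \<mu> \<tau> p \<rho>"
  shows "\<exists>q\<in>borel_measurable \<mu>. (\<forall>l\<in>space \<mu>. 0 \<le> q l \<and> q l \<le> 1) \<and>
     (\<forall>a b. complex_of_real (1 / (1 + t\<^sup>2)) *
        (cinner a (mat_vec (partial_elem \<rho> \<alpha>0 \<alpha>0) b) + (of_real t * c) * cinner a (mat_vec (partial_elem \<rho> \<alpha>0 \<alpha>1) b)
        + cnj (of_real t * c) * cinner a (mat_vec (partial_elem \<rho> \<alpha>1 \<alpha>0) b)
        + cnj (of_real t * c) * (of_real t * c) * cinner a (mat_vec (partial_elem \<rho> \<alpha>1 \<alpha>1) b))
      = (LINT l|\<mu>. complex_of_real (q l) * cinner a (mat_vec (\<tau> l) b)))"
proof -
  have P: "prob_space \<mu>" and dens: "\<forall>l\<in>space \<mu>. density_matrix (\<tau> l)"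
    and tm: "\<forall>y y'. (\<lambda>l. \<tau> l y y') \<in> borel_measurable \<mu>"
    and mm: "\<And>M. proj_meas M \<Longrightarrow>
        (\<forall>a<length M. p M a \<in> borel_measurable \<mu>) \<and>
        (\<forall>a<length M. \<forall>l\<in>space \<mu>. p M a l \<ge> 0) \<and>
        (\<forall>l\<in>space \<mu>. (\<Sum>a<length M. p M a l) = 1) \<and>
        (\<forall>a<length M. assemblage \<rho> (M ! a) =
            (\<lambda>y y'. LINT l|\<mu>. complex_of_real (p M a l) * \<tau> l y y'))"
    using model unfolding LHS_model_def by auto
  interpret prob_space \<mu> by (rule P)
  define \<psi> where "\<psi> = (\<lambda>x. \<alpha>0 x + (of_real t * c) * \<alpha>1 x)"
  define Pm where "Pm = outer \<psi> (of_real (1 / (1 + t\<^sup>2)))"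
  define Ms where "Ms = [Pm, \<lambda>i j. id_mat i j - Pm i j]"
  have N: "1 + t\<^sup>2 > 0" by (simp add: add_pos_nonneg)
  have nps: "cinner \<psi> \<psi> = of_real (1 + t\<^sup>2)" unfolding \<psi>_def by (rule norm_psi[OF on c])
  have pm: "proj_meas Ms" unfolding Ms_def Pm_def
    by (rule proj_meas_two[OF outer_proj(1)[OF nps N] outer_proj(2)[OF nps N]])
  define q where "q = p Ms 0"
  have lenM: "length Ms = 2" unfolding Ms_def by simp
  from mm[OF pm] have qm: "q \<in> borel_measurable \<mu>" and q0: "\<forall>l\<in>space \<mu>. q l \<ge> 0"
    and p1: "\<forall>l\<in>space \<mu>. p Ms 1 l \<ge> 0"
    and psum: "\<forall>l\<in>space \<mu>. (\<Sum>a<length Ms. p Ms a l) = 1"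
    and ass: "assemblage \<rho> (Ms ! 0) = (\<lambda>y y'. LINT l|\<mu>. complex_of_real (q l) * \<tau> l y y')"
    unfolding q_def lenM by auto
  have q1: "\<forall>l\<in>space \<mu>. q l \<le> 1"
  proof
    fix l assume l: "l \<in> space \<mu>"
    have "(\<Sum>a<2. p Ms a l) = q l + p Ms 1 l" unfolding q_def by (simp add: numeral_2_eq_2)
    then show "q l \<le> 1" using psum l p1 lenM by auto
  qed
  have ient: "integrable \<mu> (\<lambda>l. complex_of_real (q l) * \<tau> l y y')" for y y'
  proof (rule integrable_const_bound[where B = 1])
    show "AE l in \<mu>. norm (complex_of_real (q l) * \<tau> l y y') \<le> 1"
    proof (rule AE_I2)
      fix l assume l: "l \<in> space \<mu>"
      have "norm (complex_of_real (q l) * \<tau> l y y') = q l * cmod (\<tau> l y y')" using q0 l by (simp add: norm_mult)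
      also have "\<dots> \<le> 1 * 1" using q0 q1 l density_entry_bound[of "\<tau> l" y y'] dens by (intro mult_mono) auto
      finally show "norm (complex_of_real (q l) * \<tau> l y y') \<le> 1" by simp
    qed
    show "(\<lambda>l. complex_of_real (q l) * \<tau> l y y') \<in> borel_measurable \<mu>" using qm tm[rule_format, of y y'] by measurable
  qed
  have key: "complex_of_real (1 / (1 + t\<^sup>2)) *
        (cinner a (mat_vec (partial_elem \<rho> \<alpha>0 \<alpha>0) b) + (of_real t * c) * cinner a (mat_vec (partial_elem \<rho> \<alpha>0 \<alpha>1) b)
        + cnj (of_real t * c) * cinner a (mat_vec (partial_elem \<rho> \<alpha>1 \<alpha>0) b)
        + cnj (of_real t * c) * (of_real t * c) * cinner a (mat_vec (partial_elem \<rho> \<alpha>1 \<alpha>1) b))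
      = (LINT l|\<mu>. complex_of_real (q l) * cinner a (mat_vec (\<tau> l) b))" for a b
  proof -
    have "complex_of_real (1 / (1 + t\<^sup>2)) *
        (cinner a (mat_vec (partial_elem \<rho> \<alpha>0 \<alpha>0) b) + (of_real t * c) * cinner a (mat_vec (partial_elem \<rho> \<alpha>0 \<alpha>1) b)
        + cnj (of_real t * c) * cinner a (mat_vec (partial_elem \<rho> \<alpha>1 \<alpha>0) b)
        + cnj (of_real t * c) * (of_real t * c) * cinner a (mat_vec (partial_elem \<rho> \<alpha>1 \<alpha>1) b))
        = cinner a (mat_vec (assemblage \<rho> Pm) b)"
      unfolding Pm_def assemblage_outer mat_vec_smat cinner_scale_right \<psi>_def pe_expand ..
    also have "\<dots> = cinner a (mat_vec (\<lambda>y y'. LINT l|\<mu>. complex_of_real (q l) * \<tau> l y y') b)"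
      using ass unfolding Ms_def by simp
    also have "\<dots> = (LINT l|\<mu>. cinner a (mat_vec (\<lambda>y y'. complex_of_real (q l) * \<tau> l y y') b))"
      by (rule integral_cinner) (rule ient)
    also have "\<dots> = (LINT l|\<mu>. complex_of_real (q l) * cinner a (mat_vec (\<tau> l) b))"
      unfolding mat_vec_smat cinner_scale_right ..
    finally show ?thesis .
  qed
  show ?thesis using qm q0 q1 key by blast
qed


lemma LHS_part:
  fixes \<rho> :: "('x::finite \<times> 'y::finite) cmat" and \<mu> :: "'l measure"
  assumes on: "cinner \<alpha>0 \<alpha>0 = 1" "cinner \<alpha>1 \<alpha>1 = 1" "cinner \<alpha>0 \<alpha>1 = 0"
    and Av: "mat_vec (partial_elem \<rho> \<alpha>0 \<alpha>0) v = (\<lambda>_. 0)"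
    and w: "w = mat_vec (partial_elem \<rho> \<alpha>0 \<alpha>1) v" "w \<noteq> (\<lambda>_. 0)"
    and model: "LHS_model \<mu> \<tau> p \<rho>"
  shows False
proof -
  have P: "prob_space \<mu>" and dens: "\<forall>l\<in>space \<mu>. density_matrix (\<tau> l)"
    and tm: "\<forall>y y'. (\<lambda>l. \<tau> l y y') \<in> borel_measurable \<mu>"
    using model unfolding LHS_model_def by auto
  interpret prob_space \<mu> by (rule P)
  define S where "S = (\<lambda>a b u u'. cinner a (mat_vec (partial_elem \<rho> u u') b))"
  have S00: "S a v \<alpha>0 \<alpha>0 = 0" for a unfolding S_def Av by simp
  define f where "f = (\<lambda>l. Re (cinner v (mat_vec (\<tau> l) v)))"
  define h where "h = (\<lambda>l. Re (cinner w (mat_vec (\<tau> l) w)))"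
  define g where "g = (\<lambda>l. cinner w (mat_vec (\<tau> l) v))"
  have fr: "complex_of_real (f l) = cinner v (mat_vec (\<tau> l) v)" if "l \<in> space \<mu>" for l
    unfolding f_def using psd_real dens that unfolding density_matrix_def by blast
  have resp: "\<exists>q\<in>borel_measurable \<mu>. (\<forall>l\<in>space \<mu>. 0 \<le> q l \<and> q l \<le> 1) \<and>
     (\<forall>a. complex_of_real (1 / (1 + t\<^sup>2)) *
        (S a v \<alpha>0 \<alpha>0 + (of_real t * c) * S a v \<alpha>0 \<alpha>1 + cnj (of_real t * c) * S a v \<alpha>1 \<alpha>0
         + cnj (of_real t * c) * (of_real t * c) * S a v \<alpha>1 \<alpha>1)
      = (LINT l|\<mu>. complex_of_real (q l) * cinner a (mat_vec (\<tau> l) v)))" if c: "cmod c = 1" for c t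
    using response[OF on c model, of t] unfolding S_def by blast
  have zz: "cnj (of_real t * c) * (of_real t * c) = of_real (t\<^sup>2)" if "cmod c = 1" for c t
  proof -
    have "cnj (of_real t * c) * (of_real t * c) = of_real (t * t) * (cnj c * c)" by (simp add: mult_ac)
    also have "cnj c * c = of_real ((cmod c)\<^sup>2)" by (metis complex_norm_square mult.commute)
    finally show ?thesis using that by (simp add: power2_eq_square)
  qed
  have gam: "c * S v v \<alpha>0 \<alpha>1 + cnj c * S v v \<alpha>1 \<alpha>0 = 0" if c: "cmod c = 1" for c
  proof (rule gamma_zero)
    fix t :: real
    obtain q where qm: "q \<in> borel_measurable \<mu>" and q01: "\<forall>l\<in>space \<mu>. 0 \<le> q l \<and> q l \<le> 1"
      and e: "\<forall>a. complex_of_real (1 / (1 + t\<^sup>2)) *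
        (S a v \<alpha>0 \<alpha>0 + (of_real t * c) * S a v \<alpha>0 \<alpha>1 + cnj (of_real t * c) * S a v \<alpha>1 \<alpha>0
         + cnj (of_real t * c) * (of_real t * c) * S a v \<alpha>1 \<alpha>1)
      = (LINT l|\<mu>. complex_of_real (q l) * cinner a (mat_vec (\<tau> l) v))"
      using resp[OF c, of t] by blast
    have N: "1 + t\<^sup>2 > 0" by (simp add: add_pos_nonneg)
    have "(LINT l|\<mu>. complex_of_real (q l) * cinner v (mat_vec (\<tau> l) v)) = (LINT l|\<mu>. complex_of_real (q l * f l))"
      by (rule Bochner_Integration.integral_cong[OF refl]) (simp add: fr)
    also have "\<dots> = of_real (LINT l|\<mu>. q l * f l)" by (rule integral_complex_of_real)
    finally have e2: "complex_of_real (1 / (1 + t\<^sup>2)) *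
        (of_real t * (c * S v v \<alpha>0 \<alpha>1 + cnj c * S v v \<alpha>1 \<alpha>0) + of_real (t\<^sup>2) * S v v \<alpha>1 \<alpha>1)
       = of_real (LINT l|\<mu>. q l * f l)"
      using e[rule_format, of v] unfolding S00 zz[OF c] by (simp add: algebra_simps)
    have nn: "(LINT l|\<mu>. q l * f l) \<ge> 0"
      using q01 dens unfolding f_def density_matrix_def
      by (intro integral_nonneg_AE AE_I2) (auto intro!: mult_nonneg_nonneg psd_Re_nonneg)
    show "\<exists>r\<ge>0. of_real t * (c * S v v \<alpha>0 \<alpha>1 + cnj c * S v v \<alpha>1 \<alpha>0) + of_real (t\<^sup>2) * S v v \<alpha>1 \<alpha>1 = complex_of_real r"
    proof (intro exI conjI)
      show "0 \<le> (1 + t\<^sup>2) * (LINT l|\<mu>. q l * f l)" using N nn by simp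
      have "complex_of_real (1 + t\<^sup>2) * (complex_of_real (1 / (1 + t\<^sup>2)) *
        (of_real t * (c * S v v \<alpha>0 \<alpha>1 + cnj c * S v v \<alpha>1 \<alpha>0) + of_real (t\<^sup>2) * S v v \<alpha>1 \<alpha>1))
        = complex_of_real (1 + t\<^sup>2) * of_real (LINT l|\<mu>. q l * f l)" unfolding e2 ..
      moreover have k: "complex_of_real (1 + t\<^sup>2) * complex_of_real (1 / (1 + t\<^sup>2)) = 1"
      proof -
        have "complex_of_real ((1 + t\<^sup>2) * (1 / (1 + t\<^sup>2))) = 1" using N by simp
        then show ?thesis by (simp only: of_real_mult)
      qed
      ultimately show "of_real t * (c * S v v \<alpha>0 \<alpha>1 + cnj c * S v v \<alpha>1 \<alpha>0) + of_real (t\<^sup>2) * S v v \<alpha>1 \<alpha>1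
          = complex_of_real ((1 + t\<^sup>2) * (LINT l|\<mu>. q l * f l))"
        by (simp only: mult.assoc[symmetric] k mult_1_left of_real_mult)
    qed
  qed
  have b1: "S w v \<alpha>0 \<alpha>1 = cinner w w" unfolding S_def w(1) ..
  have ww: "cinner w w \<noteq> 0" using w(2) cinner_self_eq0 by blast
  obtain c where c: "cmod c = 1" and bne: "c * S w v \<alpha>0 \<alpha>1 + cnj c * S w v \<alpha>1 \<alpha>0 \<noteq> 0"
  proof (cases "S w v \<alpha>0 \<alpha>1 + S w v \<alpha>1 \<alpha>0 = 0")
    case True
    have "\<i> * S w v \<alpha>0 \<alpha>1 + cnj \<i> * S w v \<alpha>1 \<alpha>0 = 2 * \<i> * cinner w w"
      using True b1 by (simp add: algebra_simps eq_neg_iff_add_eq_0[symmetric])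
    then have "\<i> * S w v \<alpha>0 \<alpha>1 + cnj \<i> * S w v \<alpha>1 \<alpha>0 \<noteq> 0" using ww by simp
    then show ?thesis using that[of \<i>] by simp
  next
    case False
    then show ?thesis using that[of 1] by simp
  qed
  define \<beta>' where "\<beta>' = c * S w v \<alpha>0 \<alpha>1 + cnj c * S w v \<alpha>1 \<alpha>0"
  define b3 where "b3 = S w v \<alpha>1 \<alpha>1"
  define d where "d = S v v \<alpha>1 \<alpha>1"
  define F where "F = (\<Sum>i\<in>UNIV. cmod (v i)) * (\<Sum>j\<in>UNIV. cmod (v j))"
  define H where "H = (\<Sum>i\<in>UNIV. cmod (w i)) * (\<Sum>j\<in>UNIV. cmod (w j))"
  have ent: "\<And>i j. cmod (\<tau> l i j) \<le> 1" if "l \<in> space \<mu>" for l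
    using density_entry_bound dens that by blast
  have psdl: "psd (\<tau> l)" if "l \<in> space \<mu>" for l using dens that unfolding density_matrix_def by blast
  have formm: "(\<lambda>l. cinner a (mat_vec (\<tau> l) b)) \<in> borel_measurable \<mu>" for a b
    by (rule form_measurable) (use tm in blast)
  have fm: "f \<in> borel_measurable \<mu>" unfolding f_def
    using formm[of v v] by measurable
  have hm: "h \<in> borel_measurable \<mu>" unfolding h_def
    using formm[of w w] by measurable
  have gm: "g \<in> borel_measurable \<mu>" unfolding g_def
    by (rule formm)
  have bnd: "\<forall>l\<in>space \<mu>. 0 \<le> f l \<and> f l \<le> F \<and> 0 \<le> h l \<and> h l \<le> H"
  proof
    fix l assume l: "l \<in> space \<mu>"
    have "f l \<le> cmod (cinner v (mat_vec (\<tau> l) v))" unfolding f_def by (rule complex_Re_le_cmod)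
    also have "\<dots> \<le> F" unfolding F_def by (rule form_bound[OF ent[OF l]])
    finally have f1: "f l \<le> F" .
    have "h l \<le> cmod (cinner w (mat_vec (\<tau> l) w))" unfolding h_def by (rule complex_Re_le_cmod)
    also have "\<dots> \<le> H" unfolding H_def by (rule form_bound[OF ent[OF l]])
    finally have h1: "h l \<le> H" .
    show "0 \<le> f l \<and> f l \<le> F \<and> 0 \<le> h l \<and> h l \<le> H"
      using f1 h1 psd_Re_nonneg[OF psdl[OF l]] unfolding f_def h_def by auto
  qed
  have pw: "\<forall>l\<in>space \<mu>. \<forall>\<eta>>0. cmod (g l) \<le> (\<eta> * h l + f l / \<eta>) / 2"
    unfolding f_def g_def h_def using psd_cs psdl by blast
  have resp2: "\<forall>t. 0 < t \<longrightarrow> t \<le> 1 \<longrightarrow> (\<exists>q\<in>borel_measurable \<mu>. (\<forall>l\<in>space \<mu>. 0 \<le> q l \<and> q l \<le> 1)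
                 \<and> cmod \<beta>' * t - (cmod \<beta>' + cmod b3) * t\<^sup>2 \<le> cmod (LINT l|\<mu>. complex_of_real (q l) * g l)
                 \<and> (LINT l|\<mu>. q l * f l) \<le> cmod d * t\<^sup>2)"
  proof (intro allI impI)
    fix t :: real assume t: "0 < t" "t \<le> 1"
    obtain q where qm: "q \<in> borel_measurable \<mu>" and q01: "\<forall>l\<in>space \<mu>. 0 \<le> q l \<and> q l \<le> 1"
      and e: "\<forall>a. complex_of_real (1 / (1 + t\<^sup>2)) *
        (S a v \<alpha>0 \<alpha>0 + (of_real t * c) * S a v \<alpha>0 \<alpha>1 + cnj (of_real t * c) * S a v \<alpha>1 \<alpha>0
         + cnj (of_real t * c) * (of_real t * c) * S a v \<alpha>1 \<alpha>1)
      = (LINT l|\<mu>. complex_of_real (q l) * cinner a (mat_vec (\<tau> l) v))"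
      using resp[OF c, of t] by blast
    have N: "1 + t\<^sup>2 > 0" by (simp add: add_pos_nonneg)
    have X: "(LINT l|\<mu>. complex_of_real (q l) * g l) =
        (of_real t * \<beta>' + of_real (t\<^sup>2) * b3) / of_real (1 + t\<^sup>2)"
      using e[rule_format, of w] unfolding S00 zz[OF c] g_def \<beta>'_def b3_def
      by (simp add: algebra_simps divide_inverse)
    have lowX: "cmod \<beta>' * t - (cmod \<beta>' + cmod b3) * t\<^sup>2 \<le> cmod (LINT l|\<mu>. complex_of_real (q l) * g l)"
      unfolding X by (rule lower_bound[OF t])
    have "(LINT l|\<mu>. complex_of_real (q l) * cinner v (mat_vec (\<tau> l) v)) = (LINT l|\<mu>. complex_of_real (q l * f l))"
      by (rule Bochner_Integration.integral_cong[OF refl]) (simp add: fr)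
    also have "\<dots> = of_real (LINT l|\<mu>. q l * f l)" by (rule integral_complex_of_real)
    finally have "complex_of_real (LINT l|\<mu>. q l * f l) = complex_of_real (1 / (1 + t\<^sup>2)) *
        (of_real t * (c * S v v \<alpha>0 \<alpha>1 + cnj c * S v v \<alpha>1 \<alpha>0) + of_real (t\<^sup>2) * d)"
      using e[rule_format, of v] unfolding S00 zz[OF c] d_def by (simp add: algebra_simps)
    also have "\<dots> = complex_of_real (t\<^sup>2 / (1 + t\<^sup>2)) * d" unfolding gam[OF c] by simp
    finally have Y: "(LINT l|\<mu>. q l * f l) = Re (complex_of_real (t\<^sup>2 / (1 + t\<^sup>2)) * d)"
      by (metis Re_complex_of_real)
    have "(LINT l|\<mu>. q l * f l) \<le> cmod (complex_of_real (t\<^sup>2 / (1 + t\<^sup>2)) * d)"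
      unfolding Y by (rule complex_Re_le_cmod)
    also have "\<dots> = \<bar>t\<^sup>2 / (1 + t\<^sup>2)\<bar> * cmod d" by (simp only: norm_mult norm_of_real)
    also have "\<bar>t\<^sup>2 / (1 + t\<^sup>2)\<bar> * cmod d = t\<^sup>2 / (1 + t\<^sup>2) * cmod d"
      using N by (subst abs_of_nonneg) simp_all
    also have "\<dots> \<le> t\<^sup>2 * cmod d"
    proof -
      have "t\<^sup>2 / (1 + t\<^sup>2) \<le> t\<^sup>2" using N by (simp add: field_simps)
      then show ?thesis by (intro mult_right_mono) auto
    qed
    finally have lowY: "(LINT l|\<mu>. q l * f l) \<le> cmod d * t\<^sup>2" by (simp add: mult.commute)
    show "\<exists>q\<in>borel_measurable \<mu>. (\<forall>l\<in>space \<mu>. 0 \<le> q l \<and> q l \<le> 1)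
                 \<and> cmod \<beta>' * t - (cmod \<beta>' + cmod b3) * t\<^sup>2 \<le> cmod (LINT l|\<mu>. complex_of_real (q l) * g l)
                 \<and> (LINT l|\<mu>. q l * f l) \<le> cmod d * t\<^sup>2"
      using qm q01 lowX lowY by blast
  qed
  show False
    by (rule core_contra[OF P fm hm gm bnd pw resp2]) (use bne in \<open>auto simp: \<beta>'_def\<close>)
qed


theorem proposition1:
  fixes \<rho> :: "('x::finite \<times> 'y::finite) cmat"
    and \<alpha>0 \<alpha>1 :: "'x \<Rightarrow> complex"
  assumes dimX: "CARD('x) \<ge> 2"
    and state: "density_matrix \<rho>"
    and orthonormal: "cinner \<alpha>0 \<alpha>0 = 1" "cinner \<alpha>1 \<alpha>1 = 1" "cinner \<alpha>0 \<alpha>1 = 0"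
    and A_nonzero: "partial_elem \<rho> \<alpha>0 \<alpha>0 \<noteq> zero_mat"
    and ker_nontrivial: "mat_kernel (partial_elem \<rho> \<alpha>0 \<alpha>0) \<noteq> {\<lambda>_. 0}"
    and PBP: "mat_mult (mat_mult (orth_proj (mat_range (partial_elem \<rho> \<alpha>0 \<alpha>0)))
                                 (partial_elem \<rho> \<alpha>0 \<alpha>1))
                       (orth_proj (mat_kernel (partial_elem \<rho> \<alpha>0 \<alpha>0))) \<noteq> zero_mat"
  shows "NPT \<rho> \<and> (\<forall>(\<mu>::'l measure) \<tau> p. \<not> LHS_model \<mu> \<tau> p \<rho>)"
proof -
  obtain v where Av: "mat_vec (partial_elem \<rho> \<alpha>0 \<alpha>0) v = (\<lambda>_. 0)"
    and Bv: "mat_vec (partial_elem \<rho> \<alpha>0 \<alpha>1) v \<noteq> (\<lambda>_. 0)"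
    using extract_v[OF PBP] by blast
  have psd: "psd \<rho>" using state unfolding density_matrix_def by blast
  have "NPT \<rho>" by (rule NPT_part[OF psd Av refl Bv])
  moreover have "\<forall>(\<mu>::'l measure) \<tau> p. \<not> LHS_model \<mu> \<tau> p \<rho>"
  proof (intro allI notI)
    fix \<mu> :: "'l measure" and \<tau> p
    assume m: "LHS_model \<mu> \<tau> p \<rho>"
    show False by (rule LHS_part[OF orthonormal Av refl Bv m])
  qed
  ultimately show ?thesis by blast
qed

end
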